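(* In the setting described in the context, for any $n\ge1$, any $1\le k\le n$ and any $\tau'\in\mathcal{S}_{n-k}$, the set $$\Big\{\tau\in\mathcal{T}_n:\tau\prec\tau',\ \mathcal{I}(\tau)\cap\bigcup_{P\in\mathcal{C}_{n,k}}\Delta(P)\neq\emptyset\Big\}$$ contains at most two vertices.
   Context: Standing setup. Let $s,t>0$ with $s+t=1$, and let $\theta\in\mathbb{R}$ with $\inf_{q\in\mathbb{N}}q^{1/s}\|q\theta\|>0$, where $\|x\|$ is the distance from $x$ to the nearest integer. Let $\beta\in(0,1)$, let $A_0$ be a compact interval of length $l>0$, let $R=16\beta^{-4}$, and let $c=\min\{\inf_{q\in\mathbb{N}}q^{1/s}\|q\theta\|,\ \tfrac14 lR^{-1},\ \tfrac18R^{-2-3/t^2}\}$. Rational points are written $P=(p/q,r/q)$ with $q>0$ and $p,q,r$ coprime integers. Let $\mathcal{C}=\{(p/q,r/q)\in\mathbb{Q}^2:|\theta-p/q|<c/q^{1+s}\}$ and $\Delta(P)=\{y\in\mathbb{R}:|y-r/q|<c/q^{1+t}\}$. Non-vertical rational lines are written $L(A,B,C)=\{(x,y):y=(Ax+C)/B\}$ with $A,B,C$ coprime integers, $B>0$. For each $P=(p/q,r/q)\in\mathcal{C}$ fix a line $L_P=L(A_P,B_P,C_P)$ passing through $P$ with $|A_P|\le q^s$ and $B_P\le q^t$ (such a line exists). Let $H_n=4cl^{-1}R^n$ and $\mathcal{C}_n=\{P=(p/q,r/q)\in\mathcal{C}:H_n\le qB_P<H_{n+1}\}$ for $n\ge1$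 (these partition $\mathcal{C}$). Let $\lambda=3/t^2$, $\mu=1/(t(1+t))$, $\mathcal{C}_{n,1}=\{P\in\mathcal{C}_n:H_{n+1}^{t/(1+t)}R^{-\lambda}\le B_P<H_{n+1}^{t/(1+t)}\}$ and, for $2\le k\le n$, $\mathcal{C}_{n,k}=\{P\in\mathcal{C}_n:H_{n+1}^{t/(1+t)}R^{-\lambda-(k-1)\mu}\le B_P<H_{n+1}^{t/(1+t)}R^{-\lambda-(k-2)\mu}\}$. Let $\mathcal{T}$ be an $[R]$-regular rooted tree with root $\tau_0$ ($[\cdot]$ = integer part), $\mathcal{T}_n$ its vertices of height $n$, and $\tau\prec\tau'$ meaning $\tau'$ is an ancestor of $\tau$ (possibly equal). Fix an injective map $\mathcal{I}$ from $\mathcal{T}$ to closed subintervals of $A_0$ with $|\mathcal{I}(\tau)|=lR^{-n}$ for $\tau\in\mathcal{T}_n$, $\mathcal{I}(\tau)\subset\mathcal{I}(\tau')$ whenever $\tau\prec\tau'$, and such that for each $\tau'$ the intervals $\mathcal{I}(\tau)$ over successors $\tau$ of $\tau'$ have pairwise disjoint interiors and connected union. Define $\mathcal{S}_0=\{\tau_0\}$ and for $n\ge1$, $\mathcal{S}_n=\{\tau:\tau$ is a successor of some vertex in $\mathcal{S}_{n-1}$ and $\mathcal{I}(\tau)\cap\bigcup_{P\in\mathcal{C}_n}\Delta(P)=\emptyset\}$. *)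

theory Defs
  imports "HOL-Analysis.Analysis" "HOL-Library.Sublist"
begin

definition nid :: "real \<Rightarrow> real" where
  "nid x = min (frac x) (1 - frac x)"

definition Rpar :: "real \<Rightarrow> real" where
  "Rpar \<beta> = 16 * \<beta> powr (-4)"

definition dioph_inf :: "real \<Rightarrow> real \<Rightarrow> real" where
  "dioph_inf s \<theta> = (INF q \<in> {1::nat..}. real q powr (1/s) * nid (real q * \<theta>))"

definition cconst :: "real \<Rightarrow> real \<Rightarrow> real \<Rightarrow> real \<Rightarrow> real \<Rightarrow> real" where
  "cconst s t \<theta> \<beta> l = min (dioph_inf s \<theta>)
      (min (1/4 * l * (Rpar \<beta>) powr (-1)) (1/8 * (Rpar \<beta>) powr (-2 - 3 / t^2)))"

text \<open>Rational points (p/q, r/q) are represented by the integer triple (p,q,r) with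
  q > 0 and p, q, r coprime (i.e. gcd p q r = 1); this representation is unique.\<close>
definition ratpt :: "int \<times> int \<times> int \<Rightarrow> bool" where
  "ratpt P = (case P of (p,q,r) \<Rightarrow> q > 0 \<and> gcd p (gcd q r) = 1)"

definition Cset :: "real \<Rightarrow> real \<Rightarrow> real \<Rightarrow> (int \<times> int \<times> int) set" where
  "Cset s \<theta> c = {(p,q,r). ratpt (p,q,r) \<and> \<bar>\<theta> - real_of_int p / real_of_int q\<bar> < c / real_of_int q powr (1+s)}"

definition Delta :: "real \<Rightarrow> real \<Rightarrow> int \<times> int \<times> int \<Rightarrow> real set" where
  "Delta t c P = (case P of (p,q,r) \<Rightarrow>
      {y. \<bar>y - real_of_int r / real_of_int q\<bar> < c / real_of_int q powr (1+t)})"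

definition line_through :: "int \<times> int \<times> int \<Rightarrow> int \<times> int \<times> int \<Rightarrow> bool" where
  "line_through Lc P = (case Lc of (A,B,C) \<Rightarrow> case P of (p,q,r) \<Rightarrow>
      gcd A (gcd B C) = 1 \<and> B > 0 \<and>
      real_of_int r / real_of_int q = (real_of_int A * (real_of_int p / real_of_int q) + real_of_int C) / real_of_int B)"

definition Bof :: "int \<times> int \<times> int \<Rightarrow> int" where
  "Bof Lc = fst (snd Lc)"

definition Hn :: "real \<Rightarrow> real \<Rightarrow> real \<Rightarrow> nat \<Rightarrow> real" where
  "Hn c l R n = 4 * c * l powr (-1) * R ^ n"

text \<open>C_n, using the fixed choice of lines L (L P = (A_P, B_P, C_P)).\<close>
definition Cn :: "real \<Rightarrow> real \<Rightarrow> real \<Rightarrow> real \<Rightarrow> real \<Rightarrow> (int \<times> int \<times> int \<Rightarrow> int \<times> int \<times> int)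
    \<Rightarrow> nat \<Rightarrow> (int \<times> int \<times> int) set" where
  "Cn s \<theta> c l R L n = {P \<in> Cset s \<theta> c.
      Hn c l R n \<le> real_of_int (fst (snd P) * Bof (L P)) \<and>
      real_of_int (fst (snd P) * Bof (L P)) < Hn c l R (n+1)}"

definition Cnk :: "real \<Rightarrow> real \<Rightarrow> real \<Rightarrow> real \<Rightarrow> real \<Rightarrow> real \<Rightarrow> (int \<times> int \<times> int \<Rightarrow> int \<times> int \<times> int)
    \<Rightarrow> nat \<Rightarrow> nat \<Rightarrow> (int \<times> int \<times> int) set" where
  "Cnk s t \<theta> c l R L n k =
     (let H = Hn c l R (n+1) powr (t/(1+t)); lam = 3 / t^2; \<mu> = 1 / (t*(1+t)) in
      if k = 1 then {P \<in> Cn s \<theta> c l R L n.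
          H * R powr (-lam) \<le> real_of_int (Bof (L P)) \<and> real_of_int (Bof (L P)) < H}
      else if 2 \<le> k \<and> k \<le> n then {P \<in> Cn s \<theta> c l R L n.
          H * R powr (-lam - (real k - 1) * \<mu>) \<le> real_of_int (Bof (L P)) \<and>
          real_of_int (Bof (L P)) < H * R powr (-lam - (real k - 2) * \<mu>)}
      else {})"

text \<open>The [R]-regular rooted tree: vertices are lists over {..<m}, m = [R]; the root is [],
  the height of a vertex is its length, the successors of v are v @ [i] (i < m), and
  "tau \<prec> tau'" (tau' ancestor of tau, possibly equal) is "prefix tau' tau".\<close>
definition tree :: "nat \<Rightarrow> nat list set" where
  "tree m = {v. set v \<subseteq> {..<m}}"

definition good_I :: "nat \<Rightarrow> real \<Rightarrow> real \<Rightarrow> real \<Rightarrow> (nat list \<Rightarrow> real set) \<Rightarrow> bool" where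
  "good_I m R a b I \<longleftrightarrow>
     inj_on I (tree m) \<and>
     (\<forall>v \<in> tree m. (\<exists>u. I v = {u .. u + (b - a) * R powr (- real (length v))}) \<and> I v \<subseteq> {a..b}) \<and>
     (\<forall>v \<in> tree m. \<forall>w \<in> tree m. prefix w v \<longrightarrow> I v \<subseteq> I w) \<and>
     (\<forall>v \<in> tree m. \<forall>i<m. \<forall>j<m. i \<noteq> j \<longrightarrow> interior (I (v @ [i])) \<inter> interior (I (v @ [j])) = {}) \<and>
     (\<forall>v \<in> tree m. connected (\<Union>i<m. I (v @ [i])))"

text \<open>S_n; bad n is the union of Delta(P) over P in C_n.\<close>
fun Sset :: "nat \<Rightarrow> (nat list \<Rightarrow> real set) \<Rightarrow> (nat \<Rightarrow> real set) \<Rightarrow> nat \<Rightarrow> nat list set" where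
  "Sset m I bad 0 = {[]}"
| "Sset m I bad (Suc n) = {v @ [i] | v i. v \<in> Sset m I bad n \<and> i < m \<and> I (v @ [i]) \<inter> bad (Suc n) = {}}"

end

theory Submission
  imports Defs
begin

lemma gcd3_eq:
  fixes a1 b1 c1 a2 b2 c2 :: int
  assumes g1: "gcd a1 (gcd b1 c1) = 1" and g2: "gcd a2 (gcd b2 c2) = 1"
    and b1: "b1 > 0" and b2: "b2 > 0"
    and ea: "a1 * b2 = a2 * b1" and ec: "c1 * b2 = c2 * b1"
  shows "a1 = a2 \<and> b1 = b2 \<and> c1 = c2"
proof -
  have d1: "b1 dvd b2"
  proof -
    have "b1 dvd a1 * b2" using ea by simp
    moreover have "b1 dvd c1 * b2" using ec by simp
    moreover have "b1 dvd b1 * b2" by simp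
    ultimately have "b1 dvd gcd (b2 * a1) (gcd (b2*b1) (b2*c1))"
      by (simp add: mult.commute)
    also have "gcd (b2 * a1) (gcd (b2*b1) (b2*c1)) = \<bar>b2\<bar> * gcd a1 (gcd b1 c1)"
      using b2 by (simp add: gcd_mult_left abs_mult)
    finally show ?thesis using g1 b2 by simp
  qed
  have d2: "b2 dvd b1"
  proof -
    have "b2 dvd a2 * b1" using ea by (metis dvd_triv_right)
    moreover have "b2 dvd c2 * b1" using ec by (metis dvd_triv_right)
    moreover have "b2 dvd b2 * b1" by simp
    ultimately have "b2 dvd gcd (b1 * a2) (gcd (b1*b2) (b1*c2))"
      by (simp add: mult.commute)
    also have "gcd (b1 * a2) (gcd (b1*b2) (b1*c2)) = \<bar>b1\<bar> * gcd a2 (gcd b2 c2)"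
      using b1 by (simp add: gcd_mult_left abs_mult)
    finally show ?thesis using g2 b1 by simp
  qed
  have "b1 = b2" using d1 d2 b1 b2 by (simp add: zdvd_antisym_nonneg)
  then show ?thesis using ea ec b1 by auto
qed

lemma sset_props:
  "v \<in> Sset m I bad N \<Longrightarrow> length v = N \<and> v \<in> tree m"
  by (induction N arbitrary: v) (auto simp: tree_def subset_iff)

lemma sset_take:
  "v \<in> Sset m I bad N \<Longrightarrow> j \<le> N \<Longrightarrow> take j v \<in> Sset m I bad j"
proof (induction N arbitrary: v)
  case 0 then show ?case by simp
next
  case (Suc N)
  then obtain w i where v: "v = w @ [i]" and w: "w \<in> Sset m I bad N" by auto
  show ?case
  proof (cases "j = Suc N")
    case True
    then show ?thesis using Suc.prems sset_props[OF Suc.prems(1)] by simp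
  next
    case False
    then have "j \<le> N" using Suc.prems by simp
    moreover have "length w = N" using sset_props[OF w] by simp
    ultimately have "take j v = take j w" using v by simp
    then show ?thesis using Suc.IH[OF w] \<open>j \<le> N\<close> by simp
  qed
qed

lemma sset_avoid:
  "v \<in> Sset m I bad (Suc j) \<Longrightarrow> I v \<inter> bad (Suc j) = {}"
  by auto

lemma tree_take: "v \<in> tree m \<Longrightarrow> take j v \<in> tree m"
  unfolding tree_def using set_take_subset[of j v] by blast

lemma tree_prefix: "v \<in> tree m \<Longrightarrow> prefix w v \<Longrightarrow> w \<in> tree m"
  unfolding tree_def by (auto simp: prefix_def)

lemma tree_disj:
  assumes I: "good_I m R a b I" and v1: "v1 \<in> tree m" and v2: "v2 \<in> tree m"
    and len: "length v1 = length v2" and ne: "v1 \<noteq> v2"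
  shows "interior (I v1) \<inter> interior (I v2) = {}"
proof -
  have "v1 \<parallel> v2" using len ne unfolding parallel_def prefix_def by auto
  then obtain as x bs y cs where xy: "x \<noteq> y" and e1: "v1 = as @ x # bs" and e2: "v2 = as @ y # cs"
    using parallel_decomp by blast
  have p1: "prefix (as @ [x]) v1" using e1 by simp
  have p2: "prefix (as @ [y]) v2" using e2 by simp
  have t1: "as @ [x] \<in> tree m" using tree_prefix[OF v1 p1] .
  have t2: "as @ [y] \<in> tree m" using tree_prefix[OF v2 p2] .
  have tas: "as \<in> tree m" using t1 unfolding tree_def by auto
  have xm: "x < m" "y < m" using t1 t2 unfolding tree_def by auto
  have s1: "I v1 \<subseteq> I (as @ [x])" using I v1 t1 p1 unfolding good_I_def by blast
  have s2: "I v2 \<subseteq> I (as @ [y])" using I v2 t2 p2 unfolding good_I_def by blast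
  have "interior (I (as @ [x])) \<inter> interior (I (as @ [y])) = {}"
    using I tas xm xy unfolding good_I_def by blast
  then show ?thesis using interior_mono[OF s1] interior_mono[OF s2] by blast
qed

lemma three_elems:
  assumes "finite S" "\<not> card S \<le> 2"
  shows "\<exists>x y z. x \<in> S \<and> y \<in> S \<and> z \<in> S \<and> x \<noteq> y \<and> x \<noteq> z \<and> y \<noteq> z"
proof -
  have "Suc (Suc (Suc 0)) \<le> card S" using assms by simp
  then obtain x B where 1: "S = insert x B" "x \<notin> B" "Suc (Suc 0) \<le> card B"
    using card_le_Suc_iff[of "Suc (Suc 0)" S] by blast
  then obtain y C where 2: "B = insert y C" "y \<notin> C" "Suc 0 \<le> card C"
    using card_le_Suc_iff[of "Suc 0" B] by blast
  then obtain z D where 3: "C = insert z D" "z \<notin> D"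
    using card_le_Suc_iff[of 0 C] by blast
  show ?thesis
  proof (intro exI conjI)
    show "x \<in> S" "y \<in> S" "z \<in> S" using 1 2 3 by auto
    show "x \<noteq> y" "x \<noteq> z" "y \<noteq> z" using 1 2 3 by auto
  qed
qed

lemma sep_lemma:
  fixes u1 u2 d :: real
  assumes "d > 0" "{u1<..<u1+d} \<inter> {u2<..<u2+d} = {}"
  shows "\<bar>u1 - u2\<bar> \<ge> d"
proof (rule ccontr)
  assume "\<not> ?thesis"
  then have "(max u1 u2 + min (u1+d) (u2+d))/2 \<in> {u1<..<u1+d} \<inter> {u2<..<u2+d}"
    by (auto simp: max_def min_def)
  then show False using assms by blast
qed

lemma count_lemma:
  fixes S :: "'a set" and J :: "'a \<Rightarrow> real set" and d y :: real
  assumes fin: "finite S" and d: "d > 0"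
    and iv: "\<forall>x\<in>S. \<exists>u. J x = {u..u+d}"
    and dj: "\<forall>x\<in>S. \<forall>x'\<in>S. x \<noteq> x' \<longrightarrow> interior (J x) \<inter> interior (J x') = {}"
    and hit: "\<forall>x\<in>S. J x \<inter> {z. \<bar>z - y\<bar> < d/2} \<noteq> {}"
  shows "card S \<le> 2"
proof (rule ccontr)
  assume "\<not> ?thesis"
  then obtain x1 x2 x3 where x: "x1 \<in> S" "x2 \<in> S" "x3 \<in> S" "x1 \<noteq> x2" "x1 \<noteq> x3" "x2 \<noteq> x3"
    using three_elems[OF fin] by blast
  obtain u1 where u1: "J x1 = {u1..u1+d}" using iv x(1) by blast
  obtain u2 where u2: "J x2 = {u2..u2+d}" using iv x(2) by blast
  obtain u3 where u3: "J x3 = {u3..u3+d}" using iv x(3) by blast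
  note u = u1 u2 u3
  have s12: "\<bar>u1 - u2\<bar> \<ge> d"
  proof -
    have "interior (J x1) \<inter> interior (J x2) = {}" using dj x by blast
    then have "{u1<..<u1+d} \<inter> {u2<..<u2+d} = {}" using u by simp
    then show ?thesis by (rule sep_lemma[OF d])
  qed
  have s13: "\<bar>u1 - u3\<bar> \<ge> d"
  proof -
    have "interior (J x1) \<inter> interior (J x3) = {}" using dj x by blast
    then have "{u1<..<u1+d} \<inter> {u3<..<u3+d} = {}" using u by simp
    then show ?thesis by (rule sep_lemma[OF d])
  qed
  have s23: "\<bar>u2 - u3\<bar> \<ge> d"
  proof -
    have "interior (J x2) \<inter> interior (J x3) = {}" using dj x by blast
    then have "{u2<..<u2+d} \<inter> {u3<..<u3+d} = {}" using u by simp
    then show ?thesis by (rule sep_lemma[OF d])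
  qed
  obtain z1 where zm1: "z1 \<in> J x1" "\<bar>z1 - y\<bar> < d/2" using hit x(1) by blast
  have z1: "u1 \<le> z1" "z1 \<le> u1 + d" using zm1(1) u1 by auto
  have zy1: "z1 - y < d/2 \<and> - (z1 - y) < d/2" using zm1(2) unfolding abs_less_iff .
  obtain z2 where zm2: "z2 \<in> J x2" "\<bar>z2 - y\<bar> < d/2" using hit x(2) by blast
  have z2: "u2 \<le> z2" "z2 \<le> u2 + d" using zm2(1) u2 by auto
  have zy2: "z2 - y < d/2 \<and> - (z2 - y) < d/2" using zm2(2) unfolding abs_less_iff .
  obtain z3 where zm3: "z3 \<in> J x3" "\<bar>z3 - y\<bar> < d/2" using hit x(3) by blast
  have z3: "u3 \<le> z3" "z3 \<le> u3 + d" using zm3(1) u3 by auto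
  have zy3: "z3 - y < d/2 \<and> - (z3 - y) < d/2" using zm3(2) unfolding abs_less_iff .
  have zz: "z1 - z2 < d" "z2 - z1 < d" "z1 - z3 < d" "z3 - z1 < d" "z2 - z3 < d" "z3 - z2 < d"
    using zy1 zy2 zy3 by linarith+
  have d12: "u1 - u2 \<ge> d \<or> u2 - u1 \<ge> d" using s12 by (cases "u1 \<le> u2") auto
  have d13: "u1 - u3 \<ge> d \<or> u3 - u1 \<ge> d" using s13 by (cases "u1 \<le> u3") auto
  have d23: "u2 - u3 \<ge> d \<or> u3 - u2 \<ge> d" using s23 by (cases "u2 \<le> u3") auto
  show False using d12 d13 d23 zz z1(1,2) z2(1,2) z3(1,2) d
    by (elim disjE; linarith)
qed


lemma powr_1p: "x > 0 \<Longrightarrow> (x::real) powr (1 + a) = x * x powr a"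
  by (simp add: powr_add)

lemma powr_le_1plus: "x > 0 \<Longrightarrow> 0 < s \<Longrightarrow> s \<le> 1 \<Longrightarrow> (x::real) powr s \<le> 1 + x"
proof (cases "x \<le> 1")
  case True
  assume "x > 0" "0 < s" "s \<le> 1"
  then have "x powr s \<le> 1" using True powr_mono2[of s x 1] by simp
  then show ?thesis using \<open>x>0\<close> by simp
next
  case False
  assume "x > 0" "0 < s" "s \<le> 1"
  then have "x powr s \<le> x powr 1" using False by (intro powr_mono) auto
  then show ?thesis using \<open>x>0\<close> by simp
qed

lemma k1_core:
  fixes p1 q1 r1 p2 q2 r2 A2 B1 B2 C2 th y1 y2 c R X H M s t dl :: real
  assumes q1: "q1 > 0" and q2: "q2 > 0" and B1: "B1 > 0" and B2: "B2 > 0"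
    and s: "s > 0" "s \<le> 1" and t: "t > 0" and c: "c > 0" and R: "R \<ge> 16" and X: "X \<ge> 1"
    and A2: "\<bar>A2\<bar> \<le> q2 powr s" and B1t: "B1 \<le> q1 powr t" and B2t: "B2 \<le> q2 powr t"
    and x1: "\<bar>th - p1/q1\<bar> < c / q1 powr (1+s)" and x2: "\<bar>th - p2/q2\<bar> < c / q2 powr (1+s)"
    and yy1: "\<bar>y1 - r1/q1\<bar> < c / q1 powr (1+t)" and yy2: "\<bar>y2 - r2/q2\<bar> < c / q2 powr (1+t)"
    and dl: "\<bar>y1 - y2\<bar> \<le> dl" and Mdl: "M * dl \<le> 4*c*R^2"
    and line2: "r2/q2 = (A2*(p2/q2) + C2)/B2"
    and Bb: "H/X \<le> B1" "B1 < H" "H/X \<le> B2" "B2 < H"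
    and qB: "M/R \<le> q1*B1" "q1*B1 < M" "M/R \<le> q2*B2" "q2*B2 < M"
    and cb: "8 * c * R^2 * X \<le> 1"
  shows "\<bar>A2*p1 + C2*q1 - B2*r1\<bar> < 1"
proof -
  have Rp: "R > 0" using R by simp
  have Hp: "H > 0" using Bb B1 by linarith
  have dl0: "dl \<ge> 0" using dl by linarith
  have eq: "A2*p1 + C2*q1 - B2*r1 = q1 * (A2*(p1/q1 - p2/q2) - B2*(r1/q1 - r2/q2))"
  proof -
    have h: "B2*(r2/q2) - A2*(p2/q2) = C2" using line2 B2 by (simp add: field_simps)
    have "q1 * (A2*(p1/q1 - p2/q2) - B2*(r1/q1 - r2/q2)) = A2*p1 - B2*r1 + q1*(B2*(r2/q2) - A2*(p2/q2))"
      using q1 by (simp add: field_simps)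
    then show ?thesis using h by simp
  qed
  have BX1: "B2 < X * B1" using Bb X Hp by (simp add: field_simps)
  have BX2: "B1 < X * B2" using Bb X Hp by (simp add: field_simps)
  have q2q1: "q2 < R * X * q1"
  proof -
    have "q2 * B2 < M" by (rule qB(4))
    also have "M \<le> R * (q1 * B1)" using qB(1) Rp by (simp add: field_simps)
    also have "R * (q1*B1) < R * (q1 * (X * B2))" using BX2 q1 Rp by simp
    finally have "q2 * B2 < (R*X*q1) * B2" by (simp add: algebra_simps)
    then show ?thesis using B2 by simp
  qed
  have q1q2: "q1 < R * X * q2"
  proof -
    have "q1 * B1 < M" by (rule qB(2))
    also have "M \<le> R * (q2 * B2)" using qB(3) Rp by (simp add: field_simps)
    also have "R * (q2*B2) < R * (q2 * (X * B1))" using BX1 q2 Rp by simp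
    finally have "q1 * B1 < (R*X*q2) * B1" by (simp add: algebra_simps)
    then show ?thesis using B1 by simp
  qed
  have pd: "\<bar>p1/q1 - p2/q2\<bar> < c / q1 powr (1+s) + c / q2 powr (1+s)" using x1 x2 by linarith
  have rd: "\<bar>r1/q1 - r2/q2\<bar> < c / q1 powr (1+t) + dl + c / q2 powr (1+t)" using yy1 yy2 dl by linarith
  have t1: "q1 * \<bar>A2\<bar> * (c / q1 powr (1+s)) \<le> c * (1 + R*X)"
  proof -
    have "q1 * \<bar>A2\<bar> * (c / q1 powr (1+s)) = c * \<bar>A2\<bar> / q1 powr s"
      using q1 by (simp add: powr_1p)
    also have "\<dots> \<le> c * q2 powr s / q1 powr s" using A2 c q1 by (simp add: divide_right_mono)
    also have "\<dots> = c * (q2/q1) powr s" using q1 q2 by (simp add: powr_divide)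
    also have "\<dots> \<le> c * (1 + q2/q1)" using powr_le_1plus[of "q2/q1" s] q1 q2 s c by simp
    also have "\<dots> \<le> c * (1 + R*X)" using q2q1 q1 c by (simp add: field_simps)
    finally show ?thesis .
  qed
  have t2: "q1 * \<bar>A2\<bar> * (c / q2 powr (1+s)) \<le> c * (R*X)"
  proof -
    have "q1 * \<bar>A2\<bar> * (c / q2 powr (1+s)) \<le> q1 * q2 powr s * (c / q2 powr (1+s))"
      using A2 q1 c by (intro mult_right_mono mult_left_mono) auto
    also have "\<dots> = c * (q1 / q2)" using q2 by (simp add: powr_1p)
    also have "\<dots> \<le> c * (R*X)" using q1q2 q2 c by (simp add: field_simps)
    finally show ?thesis .
  qed
  have t3: "q1 * B2 * (c / q1 powr (1+t)) \<le> c * X"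
  proof -
    have "q1 * B2 * (c / q1 powr (1+t)) = c * B2 / q1 powr t" using q1 by (simp add: powr_1p)
    also have "\<dots> \<le> c * B2 / B1" using B1t B1 B2 c by (intro divide_left_mono) (auto intro!: mult_pos_pos)
    also have "\<dots> \<le> c * X" using BX1 B1 c by (simp add: field_simps)
    finally show ?thesis .
  qed
  have t4: "q1 * B2 * dl \<le> 4*c*R^2*X"
  proof -
    have "q1 * B2 * dl = (q1*B1) * (B2/B1) * dl" using B1 by simp
    also have "\<dots> \<le> M * X * dl"
      using qB(2) BX1 B1 dl0 q1 B2 by (intro mult_right_mono mult_mono) (auto simp: field_simps intro: less_imp_le[OF le_less_trans[OF _ qB(2)]])
    also have "\<dots> \<le> 4*c*R^2*X" using Mdl X by (simp add: algebra_simps mult_left_mono)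
    finally show ?thesis .
  qed
  have t5: "q1 * B2 * (c / q2 powr (1+t)) \<le> c * (R*X)"
  proof -
    have "q1 * B2 * (c / q2 powr (1+t)) \<le> q1 * q2 powr t * (c / q2 powr (1+t))"
      using B2t q1 c by (intro mult_right_mono mult_left_mono) auto
    also have "\<dots> = c * (q1 / q2)" using q2 by (simp add: powr_1p)
    also have "\<dots> \<le> c * (R*X)" using q1q2 q2 c by (simp add: field_simps)
    finally show ?thesis .
  qed
  have "\<bar>A2*p1 + C2*q1 - B2*r1\<bar> \<le> q1 * \<bar>A2\<bar> * \<bar>p1/q1 - p2/q2\<bar> + q1 * B2 * \<bar>r1/q1 - r2/q2\<bar>"
  proof -
    have "\<bar>A2*(p1/q1 - p2/q2) - B2*(r1/q1 - r2/q2)\<bar> \<le> \<bar>A2\<bar> * \<bar>p1/q1 - p2/q2\<bar> + B2 * \<bar>r1/q1 - r2/q2\<bar>"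
      using B2 by (metis abs_mult abs_of_pos abs_triangle_ineq4)
    then have "q1 * \<bar>A2*(p1/q1 - p2/q2) - B2*(r1/q1 - r2/q2)\<bar> \<le> q1 * (\<bar>A2\<bar> * \<bar>p1/q1 - p2/q2\<bar> + B2 * \<bar>r1/q1 - r2/q2\<bar>)"
      using q1 by (simp add: mult_left_mono)
    moreover have "\<bar>A2*p1 + C2*q1 - B2*r1\<bar> = q1 * \<bar>A2*(p1/q1 - p2/q2) - B2*(r1/q1 - r2/q2)\<bar>"
      by (simp only: eq abs_mult abs_of_pos[OF q1])
    moreover have "q1 * (\<bar>A2\<bar> * \<bar>p1/q1 - p2/q2\<bar> + B2 * \<bar>r1/q1 - r2/q2\<bar>) = q1 * \<bar>A2\<bar> * \<bar>p1/q1 - p2/q2\<bar> + q1 * B2 * \<bar>r1/q1 - r2/q2\<bar>"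
      by (simp add: algebra_simps)
    ultimately show ?thesis by linarith
  qed
  also have "\<dots> \<le> q1 * \<bar>A2\<bar> * (c / q1 powr (1+s) + c / q2 powr (1+s)) + q1 * B2 * (c / q1 powr (1+t) + dl + c / q2 powr (1+t))"
    using pd rd q1 B2 by (intro add_mono mult_left_mono) auto
  also have "\<dots> = q1 * \<bar>A2\<bar> * (c / q1 powr (1+s)) + q1 * \<bar>A2\<bar> * (c / q2 powr (1+s)) + q1 * B2 * (c / q1 powr (1+t)) + q1 * B2 * dl + q1 * B2 * (c / q2 powr (1+t))"
    by (simp add: algebra_simps)
  also have "\<dots> \<le> c * (1 + R*X) + c * (R*X) + c * X + 4*c*R^2*X + c * (R*X)"
    using t1 t2 t3 t4 t5 by linarith
  also have "\<dots> < 8 * c * R^2 * X"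
  proof -
    have "1 + 3*R*X + X < 4 * R^2 * X"
    proof -
      have R2: "R^2 \<ge> 16*R" using R by (simp add: power2_eq_square mult_right_mono)
      have a0: "R^2*X \<ge> (16*R)*X" using R2 X by (intro mult_right_mono) auto
      have a1: "R^2*X \<ge> 16*(R*X)" using a0 by (simp add: mult.assoc)
      have a2: "R*X \<ge> 16*X" using R X by (intro mult_right_mono) auto
      show ?thesis using a1 a2 X by linarith
    qed
    then have "c * (1 + 3*R*X + X) < c * (4 * R^2 * X)" using c by simp
    then show ?thesis by (simp add: algebra_simps)
  qed
  also have "\<dots> \<le> 1" by (rule cb)
  finally show ?thesis .
qed


lemma e_bound:
  fixes A B C p q r th y c s t :: real
  assumes q: "q > 0" and B: "B > 0" and c: "c > 0"
    and A: "\<bar>A\<bar> \<le> q powr s" and Bt: "B \<le> q powr t"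
    and line: "r/q = (A*(p/q)+C)/B"
    and x: "\<bar>th - p/q\<bar> < c / q powr (1+s)" and yy: "\<bar>y - r/q\<bar> < c / q powr (1+t)"
  shows "\<bar>A*th - B*y + C\<bar> < 2*c/q"
proof -
  have h: "A*(p/q) + C = B*(r/q)" using line B by (simp add: field_simps)
  have eq: "A*th - B*y + C = A*(th - p/q) - B*(y - r/q)" using h by (simp add: algebra_simps)
  have i1: "\<bar>A*(th - p/q)\<bar> \<le> c/q"
  proof -
    have "\<bar>A*(th - p/q)\<bar> = \<bar>A\<bar> * \<bar>th - p/q\<bar>" by (simp add: abs_mult)
    also have "\<dots> \<le> q powr s * (c / q powr (1+s))"
      using A x by (intro mult_mono) auto
    also have "\<dots> = c/q" using q by (simp add: powr_1p)
    finally show ?thesis .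
  qed
  have i2: "\<bar>B*(y - r/q)\<bar> < c/q"
  proof -
    have "\<bar>B*(y - r/q)\<bar> = B * \<bar>y - r/q\<bar>" using B by (simp add: abs_mult)
    also have "\<dots> < B * (c / q powr (1+t))" by (rule mult_strict_left_mono[OF yy B])
    also have "\<dots> \<le> q powr t * (c / q powr (1+t))" using Bt c q by (intro mult_right_mono) auto
    also have "\<dots> = c/q" using q by (simp add: powr_1p)
    finally show ?thesis .
  qed
  have "\<bar>A*th - B*y + C\<bar> \<le> \<bar>A*(th - p/q)\<bar> + \<bar>B*(y - r/q)\<bar>" unfolding eq by (rule abs_triangle_ineq4)
  also have "\<dots> < c/q + c/q" using i1 i2 by linarith
  finally show ?thesis by simp
qed

context
  fixes A1 B1 C1 p1 q1 r1 A2 B2 C2 p2 q2 r2 th y1 y2 c R M s t HE K W dl :: real and k :: nat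
  assumes q1: "q1 > 0" and q2: "q2 > 0" and B1: "B1 > 0" and B2: "B2 > 0" and c: "c > 0"
    and R: "R \<ge> 16" and s: "s > 0" and t: "t > 0" and st: "s + t = 1"
    and A1b: "\<bar>A1\<bar> \<le> q1 powr s" and A2b: "\<bar>A2\<bar> \<le> q2 powr s"
    and B1t: "B1 \<le> q1 powr t" and B2t: "B2 \<le> q2 powr t"
    and x1: "\<bar>th - p1/q1\<bar> < c / q1 powr (1+s)" and x2: "\<bar>th - p2/q2\<bar> < c / q2 powr (1+s)"
    and yy1: "\<bar>y1 - r1/q1\<bar> < c / q1 powr (1+t)" and yy2: "\<bar>y2 - r2/q2\<bar> < c / q2 powr (1+t)"
    and dl: "\<bar>y1 - y2\<bar> \<le> dl" and Mdl: "M * dl \<le> 4*c*R^(k+1)"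
    and line1: "r1/q1 = (A1*(p1/q1) + C1)/B1" and line2: "r2/q2 = (A2*(p2/q2) + C2)/B2"
    and HB: "HE/K \<le> B1" "B1 < HE" "HE/K \<le> B2" "B2 < HE" and K: "K > 0"
    and qB: "M/R \<le> q1*B1" "q1*B1 < M" "M/R \<le> q2*B2" "q2*B2 < M"
    and Wd: "W = (M*K/HE) powr s * HE"
    and N1: "W powr (1+t) \<le> M / R^(k+4)" and N2: "HE^2 * W powr s \<le> M / R^(k+3)"
    and N3: "HE^2 \<le> M / R^(k+1)" and c8: "8*c \<le> 1"
begin

lemma Mpos: "M > 0" using qB(2) q1 B1 by (smt (verit) mult_pos_pos)
lemma Rpos: "R > 0" using R by simp

lemma e1b: "\<bar>A1*th - B1*y1 + C1\<bar> < 2*c/q1"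
  using e_bound[OF q1 B1 c A1b B1t line1 x1 yy1] .
lemma e2b: "\<bar>A2*th - B2*y2 + C2\<bar> < 2*c/q2"
  using e_bound[OF q2 B2 c A2b B2t line2 x2 yy2] .

lemma inv_q1: "B2 * (2*c/q1) \<le> 2*c*R*B1*B2/M"
proof -
  have "M \<le> R * (q1*B1)" using qB(1) Rpos by (simp add: field_simps)
  then have "2*c*B2*M \<le> 2*c*B2*(R*(q1*B1))" using c B2 by (intro mult_left_mono) auto
  then show ?thesis using q1 Mpos by (simp add: field_simps)
qed
lemma inv_q2: "B1 * (2*c/q2) \<le> 2*c*R*B1*B2/M"
proof -
  have "M \<le> R * (q2*B2)" using qB(3) Rpos by (simp add: field_simps)
  then have "2*c*B1*M \<le> 2*c*B1*(R*(q2*B2))" using c B1 by (intro mult_left_mono) auto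
  then show ?thesis using q2 Mpos by (simp add: field_simps)
qed

lemma Tb: "\<bar>(A1*B2 - A2*B1)*th + (B2*C1 - B1*C2)\<bar> < 8*c*R^(k+1)*B1*B2/M"
proof -
  define e1 where "e1 = A1*th - B1*y1 + C1"
  define e2 where "e2 = A2*th - B2*y2 + C2"
  have id: "(A1*B2 - A2*B1)*th + (B2*C1 - B1*C2) = B2*e1 - B1*e2 - B1*B2*(y2 - y1)"
    unfolding e1_def e2_def by (simp add: algebra_simps)
  have "\<bar>B2*e1 - B1*e2 - B1*B2*(y2 - y1)\<bar> \<le> \<bar>B2*e1\<bar> + \<bar>B1*e2\<bar> + \<bar>B1*B2*(y2 - y1)\<bar>"
    by (smt (verit))
  also have "\<dots> = B2*\<bar>e1\<bar> + B1*\<bar>e2\<bar> + B1*B2*\<bar>y1 - y2\<bar>"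
    using B1 B2 by (simp add: abs_mult abs_minus_commute)
  also have "\<dots> < B2*(2*c/q1) + B1*(2*c/q2) + B1*B2*dl"
  proof -
    have "B2*\<bar>e1\<bar> < B2*(2*c/q1)" using mult_strict_left_mono[OF e1b B2] unfolding e1_def .
    moreover have "B1*\<bar>e2\<bar> < B1*(2*c/q2)" using mult_strict_left_mono[OF e2b B1] unfolding e2_def .
    moreover have "B1*B2*\<bar>y1 - y2\<bar> \<le> B1*B2*dl" using dl B1 B2 by simp
    ultimately show ?thesis by linarith
  qed
  also have "\<dots> \<le> 2*c*R*B1*B2/M + 2*c*R*B1*B2/M + B1*B2*(4*c*R^(k+1)/M)"
  proof -
    have "dl \<le> 4*c*R^(k+1)/M" using Mdl Mpos by (simp add: field_simps)
    then have "B1*B2*dl \<le> B1*B2*(4*c*R^(k+1)/M)" by (rule mult_left_mono) (use B1 B2 in simp)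
    then show ?thesis using inv_q1 inv_q2 by linarith
  qed
  also have "\<dots> \<le> 8*c*R^(k+1)*B1*B2/M"
  proof -
    have "R \<le> R^(k+1)" using R by (simp add: power_increasing[of 1 "k+1" R, simplified])
    then have "4*c*R*(B1*B2) \<le> 4*c*R^(k+1)*(B1*B2)" using c B1 B2 by (intro mult_right_mono mult_left_mono) auto
    then have "4*c*R*(B1*B2) + 4*c*R^(k+1)*(B1*B2) \<le> 8*c*R^(k+1)*(B1*B2)" by linarith
    then have "(4*c*R*(B1*B2) + 4*c*R^(k+1)*(B1*B2))/M \<le> (8*c*R^(k+1)*(B1*B2))/M"
      using Mpos by (intro divide_right_mono) auto
    moreover have "2*c*R*B1*B2/M + 2*c*R*B1*B2/M + B1*B2*(4*c*R^(k+1)/M) = (4*c*R*(B1*B2) + 4*c*R^(k+1)*(B1*B2))/M"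
      by (simp add: add_divide_distrib algebra_simps)
    ultimately show ?thesis by (simp add: mult.assoc)
  qed
  finally show ?thesis unfolding id .
qed

lemma Wpos: "W > 0" unfolding Wd using Mpos K HB B1 by simp

lemma HEpos: "HE > 0" using HB(2) B1 by linarith

lemma qK1: "q1 \<le> M*K/HE"
proof -
  have "q1 * B1 \<le> M" using qB(2) by simp
  then have "q1 \<le> M / B1" using B1 by (simp add: field_simps)
  also have "\<dots> \<le> M / (HE/K)"
  proof -
    have "0 < B1*(HE/K)" using B1 HEpos K by simp
    then show ?thesis using HB(1) Mpos by (intro divide_left_mono) auto
  qed
  finally show ?thesis using K by simp
qed
lemma qK2: "q2 \<le> M*K/HE"
proof -
  have "q2 * B2 \<le> M" using qB(4) by simp
  then have "q2 \<le> M / B2" using B2 by (simp add: field_simps)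
  also have "\<dots> \<le> M / (HE/K)"
  proof -
    have "0 < B2*(HE/K)" using B2 HEpos K by simp
    then show ?thesis using HB(3) Mpos by (intro divide_left_mono) auto
  qed
  finally show ?thesis using K by simp
qed

lemma AB1: "\<bar>A1\<bar> * B2 \<le> W"
proof -
  have "\<bar>A1\<bar> \<le> (M*K/HE) powr s" using A1b powr_mono2[of s q1 "M*K/HE"] qK1 q1 s by simp
  then have "\<bar>A1\<bar> * B2 \<le> (M*K/HE) powr s * HE" using HB(4) B2 by (intro mult_mono) auto
  then show ?thesis unfolding Wd .
qed
lemma AB2: "\<bar>A2\<bar> * B1 \<le> W"
proof -
  have "\<bar>A2\<bar> \<le> (M*K/HE) powr s" using A2b powr_mono2[of s q2 "M*K/HE"] qK2 q2 s by simp
  then have "\<bar>A2\<bar> * B1 \<le> (M*K/HE) powr s * HE" using HB(2) B1 by (intro mult_mono) auto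
  then show ?thesis unfolding Wd .
qed

lemma Dle: "\<bar>A1*B2 - A2*B1\<bar> \<le> 2*W"
proof -
  have "\<bar>A1*B2 - A2*B1\<bar> \<le> \<bar>A1*B2\<bar> + \<bar>A2*B1\<bar>" by (rule abs_triangle_ineq4)
  also have "\<dots> = \<bar>A1\<bar>*B2 + \<bar>A2\<bar>*B1" using B1 B2 by (simp add: abs_mult)
  finally show ?thesis using AB1 AB2 by linarith
qed

lemma pow_bound:
  assumes a1: "a \<ge> 1" and aW: "a \<le> 2*W" and e: "0 < e"
  shows "a powr e \<le> 2 powr e * W powr e"
proof -
  have "a powr e \<le> (2*W) powr e" using powr_mono2[of e a "2*W"] a1 aW e by simp
  also have "\<dots> = 2 powr e * W powr e" using Wpos by (simp add: powr_mult)
  finally show ?thesis .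
qed

lemma kmain:
  assumes D1: "\<bar>A1*B2 - A2*B1\<bar> \<ge> 1"
  shows "\<bar>th - (-(B2*C1 - B1*C2)/(A1*B2 - A2*B1))\<bar> < c / \<bar>A1*B2 - A2*B1\<bar> powr (1+s)"
    "\<bar>y1 - (A1*C2 - A2*C1)/(A1*B2 - A2*B1)\<bar> < c / \<bar>A1*B2 - A2*B1\<bar> powr (1+t)"
    "\<bar>A1*B2 - A2*B1\<bar> powr (1+t) < M / R^k"
proof -
  define D where "D = A1*B2 - A2*B1"
  define N where "N = B2*C1 - B1*C2"
  define Y where "Y = A1*C2 - A2*C1"
  define a where "a = \<bar>D\<bar>"
  define T where "T = 8*c*R^(k+1)*B1*B2/M"
  have a1: "a \<ge> 1" using D1 unfolding a_def D_def .
  have ap: "a > 0" using a1 by simp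
  have Dne: "D \<noteq> 0" using a1 unfolding a_def by auto
  have aW: "a \<le> 2*W" using Dle unfolding a_def D_def .
  have Rp: "R > 0" using R by simp
  have sle: "s \<le> 1" "t \<le> 1" using s t st by auto
  have Ps: "a powr s \<le> 2 * W powr s"
  proof -
    have "a powr s \<le> 2 powr s * W powr s" using pow_bound[OF a1 aW] s by simp
    also have "\<dots> \<le> 2 * W powr s" using powr_mono[of s 1 2] sle Wpos by (intro mult_right_mono) auto
    finally show ?thesis .
  qed
  have Pt: "a powr t \<le> 2 * W powr t"
  proof -
    have "a powr t \<le> 2 powr t * W powr t" using pow_bound[OF a1 aW] t by simp
    also have "\<dots> \<le> 2 * W powr t" using powr_mono[of t 1 2] sle Wpos by (intro mult_right_mono) auto
    finally show ?thesis .
  qed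
  have P1t: "a powr (1+t) \<le> 4 * (M / R^(k+4))"
  proof -
    have "a powr (1+t) \<le> 2 powr (1+t) * W powr (1+t)" using pow_bound[OF a1 aW] t by simp
    also have "\<dots> \<le> 4 * (M / R^(k+4))"
    proof (rule mult_mono)
      show "2 powr (1+t) \<le> 4" using powr_mono[of "1+t" 2 2] sle by simp
      show "W powr (1 + t) \<le> M / R ^ (k + 4)" by (rule N1)
      show "0 \<le> (4::real)" by simp
      show "0 \<le> W powr (1 + t)" by simp
    qed
    finally show ?thesis .
  qed
  have R3: "R^3 \<ge> 4096" using power_mono[OF R, of 3] by simp
  have R4b: "R^4 \<ge> 65536" using power_mono[OF R, of 4] by simp
  show "\<bar>A1*B2 - A2*B1\<bar> powr (1+t) < M / R^k"
  proof -
    have "4 * (M / R^(k+4)) = (M / R^k) * (4 / R^4)" by (simp add: power_add)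
    also have "\<dots> < (M / R^k) * 1" using Mpos Rp R4b by (intro mult_strict_left_mono) auto
    finally show ?thesis using P1t unfolding a_def D_def by simp
  qed
  have TbD: "\<bar>D*th + N\<bar> < T" using Tb unfolding D_def N_def T_def .
  have xa: "\<bar>th + N/D\<bar> < T / a"
  proof -
    have "th + N/D = (D*th + N)/D" using Dne by (simp add: field_simps)
    then have "\<bar>th + N/D\<bar> = \<bar>D*th + N\<bar> / a" unfolding a_def by (simp add: abs_divide)
    then show ?thesis using TbD ap by (simp add: divide_strict_right_mono)
  qed
  have BB: "B1 * B2 \<le> HE^2" using HB B1 B2 by (simp add: power2_eq_square mult_mono)
  have TP: "T * a powr s \<le> c"
  proof -
    have "B1*B2 * a powr s \<le> HE^2 * (2 * W powr s)" using BB Ps B1 B2 by (intro mult_mono) auto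
    also have "\<dots> \<le> 2 * (M / R^(k+3))" using N2 by simp
    finally have h: "B1*B2 * a powr s \<le> 2 * (M / R^(k+3))" .
    have "T * a powr s = 8*c*R^(k+1) * (B1*B2 * a powr s) / M" unfolding T_def by simp
    also have "\<dots> \<le> 8*c*R^(k+1) * (2 * (M / R^(k+3))) / M"
      using h c Rp Mpos by (intro divide_right_mono mult_left_mono) auto
    also have "\<dots> = c * (16 / R^2)"
    proof -
      have "R^(k+3) = R^(k+1) * R^2" by (simp add: power_add eval_nat_numeral)
      then show ?thesis using Mpos Rp by (simp add: field_simps)
    qed
    also have "\<dots> \<le> c * 1"
    proof -
      have "R^2 \<ge> 256" using power_mono[OF R, of 2] by simp
      then have "16 / R^2 \<le> 1" using R by (simp add: divide_le_eq)
      then show ?thesis using c by (intro mult_left_mono) auto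
    qed
    finally show ?thesis by simp
  qed
  have Psp: "a powr s > 0" using ap by simp
  show "\<bar>th - (-(B2*C1 - B1*C2)/(A1*B2 - A2*B1))\<bar> < c / \<bar>A1*B2 - A2*B1\<bar> powr (1+s)"
  proof -
    have "T / a = (T * a powr s) / (a * a powr s)" using Psp by simp
    also have "\<dots> \<le> c / (a * a powr s)" using TP ap Psp by (intro divide_right_mono) auto
    also have "\<dots> = c / a powr (1+s)" using ap by (simp add: powr_1p)
    finally have "\<bar>th + N/D\<bar> < c / a powr (1+s)" using xa by simp
    moreover have "th - (-(B2*C1 - B1*C2)/(A1*B2 - A2*B1)) = th + N/D" unfolding N_def D_def by (simp add: minus_divide_left)
    ultimately show ?thesis unfolding a_def D_def by simp
  qed
  define e1 where "e1 = A1*th - B1*y1 + C1"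
  have e1b': "\<bar>e1\<bar> < 2*c/q1" using e1b unfolding e1_def .
  have idb: "B1*(Y/D - y1) = A1*((-N/D) - th) + e1"
  proof -
    have "A1*(-N) + C1*D = B1*Y" unfolding N_def D_def Y_def by (simp add: algebra_simps)
    then have "A1*(-N/D) + C1 = B1*(Y/D)" using Dne by (simp add: field_simps)
    then show ?thesis unfolding e1_def by (simp add: algebra_simps)
  qed
  have yb: "B1 * \<bar>Y/D - y1\<bar> < \<bar>A1\<bar> * (T/a) + 2*c/q1"
  proof -
    have "B1 * \<bar>Y/D - y1\<bar> = \<bar>A1*((-N/D) - th) + e1\<bar>" using idb B1 by (metis abs_mult abs_of_pos)
    also have "\<dots> \<le> \<bar>A1*((-N/D) - th)\<bar> + \<bar>e1\<bar>" by (rule abs_triangle_ineq)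
    also have "\<bar>A1*((-N/D) - th)\<bar> = \<bar>A1\<bar> * \<bar>th + N/D\<bar>"
    proof -
      have "(-N/D) - th = - (th + N/D)" by simp
      then show ?thesis by (simp only: abs_mult abs_minus_cancel)
    qed
    also have "\<bar>A1\<bar> * \<bar>th + N/D\<bar> \<le> \<bar>A1\<bar> * (T/a)" using xa by (intro mult_left_mono) auto
    finally show ?thesis using e1b' by linarith
  qed
  define u where "u = a powr t"
  have up: "u > 0" unfolding u_def using ap by simp
  have au: "a * u = a powr (1+t)" unfolding u_def using ap by (simp add: powr_1p)
  have part1: "\<bar>A1\<bar> * (T/a) \<le> B1 * (c / (2 * (a * u)))"
  proof -
    have h1: "\<bar>A1\<bar> * B2 * u \<le> W * (2 * W powr t)" unfolding u_def using AB1 Pt Wpos by (intro mult_mono) auto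
    have "W * (2 * W powr t) = 2 * W powr (1+t)" using Wpos by (simp add: powr_1p)
    also have "\<dots> \<le> 2 * (M / R^(k+4))" using N1 by simp
    finally have h2: "\<bar>A1\<bar> * B2 * u \<le> 2 * (M / R^(k+4))" using h1 by simp
    have "16 * R^(k+1) * (\<bar>A1\<bar> * B2 * u) \<le> 16 * R^(k+1) * (2 * (M / R^(k+4)))"
      using h2 Rp by (intro mult_left_mono) auto
    also have "\<dots> = M * (32 / R^3)"
    proof -
      have "R^(k+4) = R^(k+1) * R^3" by (simp add: power_add eval_nat_numeral)
      then show ?thesis using Rp by (simp add: field_simps)
    qed
    also have "\<dots> \<le> M * 1"
    proof -
      have "32 / R^3 \<le> 1" using R3 R by (simp add: divide_le_eq)
      then show ?thesis using Mpos by (intro mult_left_mono) auto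
    qed
    finally have h3: "16 * R^(k+1) * (\<bar>A1\<bar> * B2 * u) / M \<le> 1" using Mpos by simp
    have "\<bar>A1\<bar> * (T/a) = B1 * (c / (2 * (a * u))) * (16 * R^(k+1) * (\<bar>A1\<bar> * B2 * u) / M)"
      unfolding T_def using ap up Mpos B1 by (simp add: field_simps)
    also have "\<dots> \<le> B1 * (c / (2 * (a * u))) * 1"
      using h3 B1 c ap up by (intro mult_left_mono) auto
    finally show ?thesis by simp
  qed
  have part2: "2*c/q1 \<le> B1 * (c / (2 * (a * u)))"
  proof -
    have "4 * R * (a * u) \<le> 4 * R * (4 * (M / R^(k+4)))" using Rp P1t au by (intro mult_left_mono) auto
    also have "\<dots> = M * (16 / R^(k+3))"
    proof -
      have "R^(k+4) = R * R^(k+3)" by (simp add: power_add eval_nat_numeral)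
      then show ?thesis using Rp by (simp add: field_simps)
    qed
    also have "\<dots> \<le> M * 1"
    proof -
      have "R^3 \<le> R^(k+3)" by (rule power_increasing) (use R in auto)
      then have "16 \<le> R^(k+3)" using R3 by linarith
      then have "16 / R^(k+3) \<le> 1" using R by (simp add: divide_le_eq)
      then show ?thesis using Mpos by (intro mult_left_mono) auto
    qed
    finally have h: "4 * R * (a * u) / M \<le> 1" using Mpos by simp
    have "1 / q1 \<le> R * B1 / M"
    proof -
      have "M \<le> R * (q1*B1)" using qB(1) Rp by (simp add: field_simps)
      then show ?thesis using q1 Mpos by (simp add: field_simps)
    qed
    then have "2*c*(1/q1) \<le> 2*c*(R*B1/M)" using c by (intro mult_left_mono) auto
    then have "2*c/q1 \<le> 2*c*(R*B1/M)" by simp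
    also have "\<dots> = B1 * (c / (2 * (a * u))) * (4 * R * (a * u) / M)"
      using ap up Mpos by (simp add: field_simps)
    also have "\<dots> \<le> B1 * (c / (2 * (a * u))) * 1" using h B1 c ap up by (intro mult_left_mono) auto
    finally show ?thesis by simp
  qed
  show "\<bar>y1 - (A1*C2 - A2*C1)/(A1*B2 - A2*B1)\<bar> < c / \<bar>A1*B2 - A2*B1\<bar> powr (1+t)"
  proof -
    have "B1 * \<bar>Y/D - y1\<bar> < B1 * (c / (2 * (a * u))) + B1 * (c / (2 * (a * u)))"
      using yb part1 part2 by linarith
    also have "\<dots> = B1 * (c / (a * u))" by (simp add: field_simps)
    finally have "B1 * \<bar>Y/D - y1\<bar> < B1 * (c / (a * u))" .
    then have "\<bar>Y/D - y1\<bar> < c / (a * u)" by (meson B1 mult_less_cancel_left_pos)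
    then have "\<bar>Y/D - y1\<bar> < c / a powr (1+t)" unfolding au .
    then show ?thesis unfolding a_def Y_def D_def by (simp add: abs_minus_commute)
  qed
qed

lemma kzero:
  assumes D0: "A1*B2 - A2*B1 = 0"
  shows "\<bar>B2*C1 - B1*C2\<bar> < 1"
proof -
  have "\<bar>B2*C1 - B1*C2\<bar> < 8*c*R^(k+1)*B1*B2/M" using Tb D0 by simp
  also have "\<dots> = 8*c*R^(k+1)*(B1*B2)/M" by (simp add: mult.assoc)
  also have "\<dots> \<le> 8*c*R^(k+1)*HE^2/M"
  proof -
    have "B1*B2 \<le> HE^2" using HB B1 B2 by (simp add: power2_eq_square mult_mono)
    then show ?thesis using c Mpos R by (intro divide_right_mono mult_left_mono) auto
  qed
  also have "\<dots> \<le> 8*c*R^(k+1)*(M/R^(k+1))/M"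
    using N3 c Mpos R by (intro divide_right_mono mult_left_mono) auto
  also have "\<dots> = 8*c" using Mpos R by simp
  finally show ?thesis using c8 by simp
qed

end

lemma ln_div_pow: "(M::real) > 0 \<Longrightarrow> R > 0 \<Longrightarrow> ln (M / R^n) = ln M - real n * ln R"
  by (simp add: ln_div ln_realpow)

lemma num_kge2:
  fixes t M R :: real and k :: nat
  assumes t: "0 < t" "t < 1" and M: "M \<ge> 1" and R: "R \<ge> 16" and k: "k \<ge> 2"
  defines "s \<equiv> 1 - t"
  defines "lam \<equiv> 3 / t^2"
  defines "mu \<equiv> 1 / (t*(1+t))"
  defines "e \<equiv> - lam - (real k - 2) * mu"
  defines "HE \<equiv> M powr (t/(1+t)) * R powr e"
  defines "W \<equiv> (M * R powr mu / HE) powr s * HE"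
  shows "W powr (1+t) \<le> M / R^(k+4)" "HE^2 * W powr s \<le> M / R^(k+3)" "HE^2 \<le> M / R^(k+1)"
proof -
  define lM where "lM = ln M"
  define lR where "lR = ln R"
  define a where "a = t/(1+t)"
  have ha: "(1+t)*a = t" unfolding a_def using t by simp
  have lM0: "lM \<ge> 0" using M by (simp add: lM_def)
  have lR0: "lR > 0" using R by (simp add: lR_def)
  have Mp: "M > 0" "R > 0" using M R by auto
  have HEp: "HE > 0" unfolding HE_def using Mp by simp
  have Wp: "W > 0" unfolding W_def using Mp HEp by simp
  have lHE: "ln HE = a*lM + e*lR"
    unfolding HE_def lM_def lR_def a_def using Mp by (simp add: ln_mult)
  have lW: "ln W = s*(lM + mu*lR - ln HE) + ln HE"
    unfolding W_def lM_def lR_def using Mp HEp by (simp add: ln_mult ln_div)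
  have tt: "t*t \<le> 1" using t by (intro mult_le_one) auto
  have mu1: "2 * mu \<ge> 1"
  proof -
    have "t*(1+t) \<le> 2" using t tt by (simp add: algebra_simps)
    moreover have "t*(1+t) > 0" using t by simp
    ultimately show ?thesis unfolding mu_def by (simp add: le_divide_eq)
  qed
  have lam3: "lam \<ge> 3"
  proof -
    have "t^2 \<le> 1" using tt by (simp add: power2_eq_square)
    moreover have "t^2 > 0" using t by simp
    ultimately show ?thesis unfolding lam_def by (simp add: le_divide_eq)
  qed
  have e4: "2 * e \<le> - real k - 4"
  proof -
    have "(real k - 2) * (2*mu) \<ge> (real k - 2) * 1" using mu1 k by (intro mult_left_mono) auto
    then show ?thesis unfolding e_def using lam3 by (simp add: algebra_simps)
  qed
  have m2: "(1+t)*t*mu = 1" unfolding mu_def using t by simp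
  have l1: "t*lam = 3/t" unfolding lam_def using t by (simp add: power2_eq_square)
  have cR: "(1+t)*(s*mu + (1-s)*e) = - 2/t - 2 - real k"
  proof -
    have m1: "(1+t)*mu = 1/t" unfolding mu_def using t by simp
    have "(1+t)*(s*mu + (1-s)*e) = s * ((1+t)*mu) - (1+t)*(t*lam) - (real k - 2)*((1+t)*t*mu)"
      unfolding s_def e_def by (simp add: algebra_simps)
    also have "\<dots> = (1-t)/t - (1+t)*(3/t) - (real k - 2)" unfolding m1 m2 l1 s_def by simp
    also have "\<dots> = - 2/t - 2 - real k" using t by (simp add: field_simps)
    finally show ?thesis .
  qed
  have cR2: "- 2/t - 2 - real k \<le> - real k - 4"
  proof -
    have "2/t \<ge> 2" using t by (simp add: le_divide_eq)
    then show ?thesis by linarith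
  qed
  have e1: "(1+t)*ln W = lM*((1+t)* s + t*(1-s)) + lR*((1+t)*(s*mu + (1-s)*e))"
  proof -
    have "(1+t)*ln W - (lM*((1+t)* s + t*(1-s)) + lR*((1+t)*(s*mu + (1-s)*e))) = (1-s)*lM*((1+t)*a - t)"
      unfolding lW lHE by (simp add: algebra_simps)
    then show ?thesis using ha by simp
  qed
  have cM: "(1+t)* s + t*(1-s) = 1" unfolding s_def by (simp add: algebra_simps)
  have f1: "ln (W powr (1+t)) \<le> ln (M / R^(k+4))"
  proof -
    have "ln (W powr (1+t)) = (1+t) * ln W" by simp
    also have "\<dots> = lM + lR * (- 2/t - 2 - real k)" unfolding e1 cM cR by simp
    also have "\<dots> \<le> lM + lR * (- real k - 4)"
      using cR2 lR0 by (simp add: mult_left_mono)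
    also have "\<dots> = ln (M / R^(k+4))" using ln_div_pow[OF Mp, of "k+4"] unfolding lM_def lR_def
      by (simp add: algebra_simps)
    finally show ?thesis .
  qed
  have pW: "W powr (1+t) > 0" using Wp by simp
  have pM4: "M / R^(k+4) > 0" using Mp by simp
  show "W powr (1+t) \<le> M / R^(k+4)" using f1 ln_le_cancel_iff[OF pW pM4] by blast
  have neg: "s*mu + (1-s)*e \<le> 0"
  proof (rule ccontr)
    assume "\<not> ?thesis"
    then have "(1+t)*(s*mu + (1-s)*e) > 0" using t by simp
    then show False using cR cR2 by simp
  qed
  have sneg: "s * (s*mu + (1-s)*e) \<le> 0"
    using neg t unfolding s_def by (intro mult_nonneg_nonpos) auto
  have cM2: "2*a + s* s + s*(1-s)*a = 1"
  proof -
    have "(1+t)*(2*a + s* s + s*(1-s)*a) = 2*((1+t)*a) + (1+t)* s* s + s*(1-s)*((1+t)*a)"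
      by (simp add: algebra_simps)
    also have "\<dots> = 1 + t" unfolding ha s_def by (simp add: algebra_simps power2_eq_square)
    finally have "(1+t)*(2*a + s* s + s*(1-s)*a) = (1+t)*1" by simp
    then show ?thesis using t by (metis mult_cancel_left not_add_less2 zero_less_one add_pos_pos less_irrefl)
  qed
  have f2: "ln (HE^2 * W powr s) \<le> ln (M / R^(k+3))"
  proof -
    have "ln (HE^2 * W powr s) = 2 * ln HE + s * ln W" using Wp HEp by (simp add: ln_mult ln_realpow)
    also have "\<dots> = lM * (2*a + s* s + s*(1-s)*a) + lR * (2*e + s * (s*mu + (1-s)*e))"
      unfolding lW lHE by (simp add: algebra_simps)
    also have "\<dots> \<le> lM * 1 + lR * (- real k - 3)"
      unfolding cM2 using e4 sneg lR0 by (intro add_left_mono mult_left_mono) auto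
    also have "\<dots> = ln (M / R^(k+3))" using ln_div_pow[OF Mp, of "k+3"] unfolding lM_def lR_def
      by (simp add: algebra_simps)
    finally show ?thesis .
  qed
  have pHW: "HE^2 * W powr s > 0" using Wp HEp by simp
  have pM3: "M / R^(k+3) > 0" using Mp by simp
  show "HE^2 * W powr s \<le> M / R^(k+3)" using f2 ln_le_cancel_iff[OF pHW pM3] by blast
  have a1: "2*a \<le> 1"
  proof -
    have "(1+t)*(2*a) = 2*((1+t)*a)" by simp
    also have "\<dots> = 2*t" using ha by simp
    also have "\<dots> \<le> (1+t)*1" using t by simp
    finally have "(1+t)*(2*a) \<le> (1+t)*1" .
    then show ?thesis using t mult_le_cancel_left_pos[of "1+t" "2*a" 1] by simp
  qed
  have f3: "ln (HE^2) \<le> ln (M / R^(k+1))"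
  proof -
    have "ln (HE^2) = lM * (2*a) + lR * (2*e)" using HEp lHE by (simp add: ln_realpow algebra_simps)
    also have "\<dots> \<le> lM * 1 + lR * (- real k - 1)"
    proof -
      have "lM * (2*a) \<le> lM * 1" using lM0 a1 by (intro mult_left_mono) auto
      moreover have "lR * (2*e) \<le> lR * (- real k - 1)" using e4 lR0 by (intro mult_left_mono) auto
      ultimately show ?thesis by linarith
    qed
    also have "\<dots> = ln (M / R^(k+1))" using ln_div_pow[OF Mp, of "k+1"] unfolding lM_def lR_def
      by (simp add: algebra_simps)
    finally show ?thesis .
  qed
  have pH2: "HE^2 > 0" using HEp by simp
  have pM1: "M / R^(k+1) > 0" using Mp by simp
  show "HE^2 \<le> M / R^(k+1)" using f3 ln_le_cancel_iff[OF pH2 pM1] by blast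
qed


lemma ratpt_eq:
  fixes p1 q1 r1 p2 q2 r2 :: int
  assumes "ratpt (p1,q1,r1)" "ratpt (p2,q2,r2)"
    and "real_of_int p1 / real_of_int q1 = real_of_int p2 / real_of_int q2"
    and "real_of_int r1 / real_of_int q1 = real_of_int r2 / real_of_int q2"
  shows "(p1,q1,r1) = (p2,q2,r2)"
proof -
  have q: "q1 > 0" "q2 > 0" and g: "gcd p1 (gcd q1 r1) = 1" "gcd p2 (gcd q2 r2) = 1"
    using assms(1,2) unfolding ratpt_def by auto
  have "real_of_int (p1 * q2) = real_of_int (p2 * q1)" using assms(3) q by (simp add: field_simps)
  then have e1: "p1 * q2 = p2 * q1" by linarith
  have "real_of_int (r1 * q2) = real_of_int (r2 * q1)" using assms(4) q by (simp add: field_simps)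
  then have e2: "r1 * q2 = r2 * q1" by linarith
  show ?thesis using gcd3_eq[OF g q e1 e2] by simp
qed

lemma lines_eq:
  fixes A1 B1 C1 A2 B2 C2 :: int and x1 y1 x2 y2 :: real
  assumes g1: "gcd A1 (gcd B1 C1) = 1" and g2: "gcd A2 (gcd B2 C2) = 1"
    and b: "B1 > 0" "B2 > 0" and ne: "(x1,y1) \<noteq> (x2,y2)"
    and h11: "B1*y1 = A1*x1 + C1" and h12: "B1*y2 = A1*x2 + C1"
    and h21: "B2*y1 = A2*x1 + C2" and h22: "B2*y2 = A2*x2 + C2"
  shows "(A1,B1,C1) = (A2,B2,C2)"
proof -
  have xne: "x1 \<noteq> x2"
  proof
    assume "x1 = x2"
    then have "B1*y1 = B1*y2" using h11 h12 by simp
    then have "y1 = y2" using b by simp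
    then show False using ne \<open>x1 = x2\<close> by simp
  qed
  have s1: "B1*(y1 - y2) = A1*(x1 - x2)" unfolding right_diff_distrib h11 h12 by simp
  have s2: "B2*(y1 - y2) = A2*(x1 - x2)" unfolding right_diff_distrib h21 h22 by simp
  have "(A1*B2)*(x1 - x2) = (A2*B1)*(x1 - x2)"
  proof -
    have "(A1*B2)*(x1 - x2) = B2*(A1*(x1-x2))" by (simp add: algebra_simps)
    also have "\<dots> = B2*(B1*(y1 - y2))" using s1 by simp
    also have "\<dots> = B1*(B2*(y1 - y2))" by (simp add: algebra_simps)
    also have "\<dots> = B1*(A2*(x1-x2))" using s2 by simp
    also have "\<dots> = (A2*B1)*(x1-x2)" by (simp add: algebra_simps)
    finally show ?thesis .
  qed
  then have ra: "real_of_int (A1*B2) = real_of_int (A2*B1)" using xne by simp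
  then have ea: "A1*B2 = A2*B1" by linarith
  have "real_of_int (C1*B2) = real_of_int (C2*B1)"
  proof -
    have "C1*B2 = (B1*y1 - A1*x1)*B2" using h11 by simp
    also have "\<dots> = B1*(B2*y1) - (A1*B2)*x1" by (simp add: algebra_simps)
    also have "\<dots> = B1*(B2*y1) - (A2*B1)*x1" using ra by simp
    also have "\<dots> = B1*(B2*y1 - A2*x1)" by (simp add: algebra_simps)
    also have "\<dots> = B1*C2" using h21 by simp
    finally show ?thesis by (simp add: mult.commute)
  qed
  then have ec: "C1*B2 = C2*B1" by linarith
  show ?thesis using gcd3_eq[OF g1 g2 b ea ec] by simp
qed

lemma mk_ratpt:
  fixes D N Y :: int
  assumes D: "D \<noteq> 0"
  shows "\<exists>p q r. ratpt (p,q,r) \<and> q \<le> \<bar>D\<bar> \<and> real_of_int p / real_of_int q = - real_of_int N / real_of_int D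
           \<and> real_of_int r / real_of_int q = real_of_int Y / real_of_int D"
proof -
  define d where "d = \<bar>D\<bar>"
  define pn where "pn = - N * sgn D"
  define yn where "yn = Y * sgn D"
  define g where "g = gcd pn (gcd d yn)"
  have dpos: "d > 0" unfolding d_def using D by simp
  have gpos: "g > 0" unfolding g_def using dpos by simp
  have gd: "g dvd pn" "g dvd d" "g dvd yn" unfolding g_def by (meson gcd_dvd1 gcd_dvd2 dvd_trans)+
  obtain p where p: "pn = g * p" using gd(1) by (auto elim: dvdE)
  obtain q where q: "d = g * q" using gd(2) by (auto elim: dvdE)
  obtain r where r: "yn = g * r" using gd(3) by (auto elim: dvdE)
  have qpos: "q > 0" using dpos gpos q by (simp add: zero_less_mult_iff)
  have "g * gcd p (gcd q r) = gcd (g*p) (gcd (g*q) (g*r))" using gpos by (simp add: gcd_mult_left abs_mult)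
  also have "\<dots> = gcd pn (gcd d yn)" by (simp only: p q r)
  also have "\<dots> = g" by (simp add: g_def)
  finally have g1: "gcd p (gcd q r) = 1" using gpos by simp
  have qd: "q \<le> \<bar>D\<bar>"
  proof -
    have "1 * q \<le> g * q" using gpos qpos by (intro mult_right_mono) auto
    then show ?thesis using q unfolding d_def by simp
  qed
  have rg: "real_of_int g > 0" using gpos by simp
  have e1: "real_of_int p / real_of_int q = - real_of_int N / real_of_int D"
  proof -
    have "real_of_int p / real_of_int q = (real_of_int g * real_of_int p) / (real_of_int g * real_of_int q)"
      using rg by simp
    also have "\<dots> = real_of_int pn / real_of_int d" using p q by simp
    also have "\<dots> = - real_of_int N / real_of_int D"
    proof (cases "D > 0")
      case True then show ?thesis unfolding pn_def d_def by simp
    next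
      case False then have "D < 0" using D by simp
      then show ?thesis unfolding pn_def d_def by simp
    qed
    finally show ?thesis .
  qed
  have e2: "real_of_int r / real_of_int q = real_of_int Y / real_of_int D"
  proof -
    have "real_of_int r / real_of_int q = (real_of_int g * real_of_int r) / (real_of_int g * real_of_int q)"
      using rg by simp
    also have "\<dots> = real_of_int yn / real_of_int d" using r q by simp
    also have "\<dots> = real_of_int Y / real_of_int D"
    proof (cases "D > 0")
      case True then show ?thesis unfolding yn_def d_def by simp
    next
      case False then have "D < 0" using D by simp
      then show ?thesis unfolding yn_def d_def by simp
    qed
    finally show ?thesis .
  qed
  show ?thesis using g1 qpos qd e1 e2 by (intro exI[of _ p] exI[of _ q] exI[of _ r]) (simp add: ratpt_def)
qed

lemma find_level:
  fixes H :: "nat \<Rightarrow> real"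
  shows "H 1 \<le> x \<Longrightarrow> x < H (N+1) \<Longrightarrow> \<exists>j. 1 \<le> j \<and> j \<le> N \<and> H j \<le> x \<and> x < H (j+1)"
proof (induction N)
  case 0 then show ?case by simp
next
  case (Suc N)
  show ?case
  proof (cases "x < H (N+1)")
    case True
    from Suc.IH[OF Suc.prems(1) True] obtain j where "1 \<le> j" "j \<le> N" "H j \<le> x" "x < H (j+1)" by blast
    then show ?thesis by (intro exI[of _ j]) auto
  next
    case False
    then show ?thesis using Suc.prems by (intro exI[of _ "Suc N"]) auto
  qed
qed


lemma unpack:
  assumes P: "(p,q,r) \<in> Cset s \<theta> c" and LP: "L (p,q,r) = (A,B,C)"
    and Lh: "\<forall>P \<in> Cset s \<theta> c. line_through (L P) P \<and>
              real_of_int \<bar>fst (L P)\<bar> \<le> real_of_int (fst (snd P)) powr s \<and>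
              real_of_int (Bof (L P)) \<le> real_of_int (fst (snd P)) powr t"
  shows "q > 0" "ratpt (p,q,r)" "\<bar>\<theta> - real_of_int p / real_of_int q\<bar> < c / real_of_int q powr (1+s)"
    "gcd A (gcd B C) = 1" "B > 0"
    "real_of_int r / real_of_int q = (real_of_int A * (real_of_int p / real_of_int q) + real_of_int C) / real_of_int B"
    "\<bar>real_of_int A\<bar> \<le> real_of_int q powr s" "real_of_int B \<le> real_of_int q powr t"
proof -
  have c1: "ratpt (p,q,r)" "\<bar>\<theta> - real_of_int p / real_of_int q\<bar> < c / real_of_int q powr (1+s)"
    using P unfolding Cset_def by auto
  then show "q > 0" "ratpt (p,q,r)" "\<bar>\<theta> - real_of_int p / real_of_int q\<bar> < c / real_of_int q powr (1+s)"
    unfolding ratpt_def by auto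
  have l: "line_through (A,B,C) (p,q,r)" "real_of_int \<bar>A\<bar> \<le> real_of_int q powr s" "real_of_int B \<le> real_of_int q powr t"
    using Lh P LP unfolding Bof_def by force+
  then show "gcd A (gcd B C) = 1" "B > 0"
    "real_of_int r / real_of_int q = (real_of_int A * (real_of_int p / real_of_int q) + real_of_int C) / real_of_int B"
    "\<bar>real_of_int A\<bar> \<le> real_of_int q powr s" "real_of_int B \<le> real_of_int q powr t"
    unfolding line_through_def by auto
qed

lemma Delta_iff: "y \<in> Delta t c (p,q,r) \<longleftrightarrow> \<bar>y - real_of_int r / real_of_int q\<bar> < c / real_of_int q powr (1+t)"
  by (simp add: Delta_def)

lemma Cn_iff: "(p,q,r) \<in> Cn s \<theta> c l R L j \<longleftrightarrow> (p,q,r) \<in> Cset s \<theta> c \<and>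
   Hn c l R j \<le> real_of_int (q * Bof (L (p,q,r))) \<and> real_of_int (q * Bof (L (p,q,r))) < Hn c l R (j+1)"
  by (simp add: Cn_def)

lemma Cnk1: "P \<in> Cnk s t \<theta> c l R L n 1 \<longleftrightarrow> P \<in> Cn s \<theta> c l R L n \<and>
   Hn c l R (n+1) powr (t/(1+t)) * R powr (- (3/t^2)) \<le> real_of_int (Bof (L P)) \<and>
   real_of_int (Bof (L P)) < Hn c l R (n+1) powr (t/(1+t))"
  by (simp add: Cnk_def Let_def)

lemma Cnk2: "2 \<le> k \<Longrightarrow> k \<le> n \<Longrightarrow> P \<in> Cnk s t \<theta> c l R L n k \<longleftrightarrow> P \<in> Cn s \<theta> c l R L n \<and>
   Hn c l R (n+1) powr (t/(1+t)) * R powr (- (3/t^2) - (real k - 1) * (1/(t*(1+t)))) \<le> real_of_int (Bof (L P)) \<and>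
   real_of_int (Bof (L P)) < Hn c l R (n+1) powr (t/(1+t)) * R powr (- (3/t^2) - (real k - 2) * (1/(t*(1+t))))"
  by (simp add: Cnk_def Let_def)


lemma delta_near:
  assumes P: "(p,q,r) \<in> Cset s \<theta> c" and LP: "L (p,q,r) = (A,B,C)"
    and Lh: "\<forall>P \<in> Cset s \<theta> c. line_through (L P) P \<and>
              real_of_int \<bar>fst (L P)\<bar> \<le> real_of_int (fst (snd P)) powr s \<and>
              real_of_int (Bof (L P)) \<le> real_of_int (fst (snd P)) powr t"
    and Hq: "Hx \<le> real_of_int q * real_of_int B" and Hx: "Hx = 4*c/l*R^n"
    and y: "y \<in> Delta t c (p,q,r)" and c: "c > 0" and l: "l > 0" and R: "R > 0"
  shows "\<bar>y - (real_of_int A * \<theta> + real_of_int C) / real_of_int B\<bar> < (l / R^n) / 2"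
proof -
  note u = unpack[OF P LP Lh]
  define Q where "Q = real_of_int q"
  define BB where "BB = real_of_int B"
  have Qp: "Q > 0" using u(1) unfolding Q_def by simp
  have Bp: "BB > 0" using u(5) unfolding BB_def by simp
  have QB: "Q powr (1+t) \<ge> Q * BB"
  proof -
    have "Q powr (1+t) = Q * Q powr t" using Qp by (simp add: powr_add)
    moreover have "Q * BB \<le> Q * Q powr t" using u(8) Qp unfolding Q_def BB_def by simp
    ultimately show ?thesis by simp
  qed
  have i1: "\<bar>y - real_of_int r / Q\<bar> < c / (Q * BB)"
  proof -
    have "\<bar>y - real_of_int r / Q\<bar> < c / Q powr (1+t)" using y unfolding Q_def by (simp add: Delta_def)
    also have "\<dots> \<le> c / (Q * BB)" using QB c Qp Bp by (intro divide_left_mono) auto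
    finally show ?thesis .
  qed
  have i2: "\<bar>real_of_int r / Q - (real_of_int A * \<theta> + real_of_int C) / BB\<bar> \<le> c / (Q * BB)"
  proof -
    have "real_of_int r / Q - (real_of_int A * \<theta> + real_of_int C) / BB = real_of_int A * (real_of_int p / Q - \<theta>) / BB"
      using u(6) Bp unfolding Q_def BB_def by (simp add: field_simps)
    then have "\<bar>real_of_int r / Q - (real_of_int A * \<theta> + real_of_int C) / BB\<bar> = \<bar>real_of_int A\<bar> * \<bar>\<theta> - real_of_int p / Q\<bar> / BB"
      using Bp by (simp add: abs_mult abs_divide abs_minus_commute)
    also have "\<dots> \<le> (Q powr s * (c / Q powr (1+s))) / BB"
      using u(7) u(3) Bp unfolding Q_def by (intro divide_right_mono mult_mono) auto
    also have "\<dots> = c / (Q * BB)" using Qp by (simp add: powr_add)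
    finally show ?thesis .
  qed
  have i3: "c / (Q * BB) \<le> (l / R^n) / 4"
  proof -
    have "c / (Q * BB) \<le> c / Hx" using Hq c Qp Bp Hx l R unfolding Q_def BB_def
      by (intro divide_left_mono) auto
    also have "\<dots> = (l / R^n) / 4" unfolding Hx using c l R by (simp add: field_simps)
    finally show ?thesis .
  qed
  have tri: "\<bar>y - (real_of_int A * \<theta> + real_of_int C) / BB\<bar> \<le> \<bar>y - real_of_int r / Q\<bar> + \<bar>real_of_int r / Q - (real_of_int A * \<theta> + real_of_int C) / BB\<bar>"
    using abs_triangle_ineq[of "y - real_of_int r / Q" "real_of_int r / Q - (real_of_int A * \<theta> + real_of_int C) / BB"] by simp
  define e0 where "e0 = \<bar>y - (real_of_int A * \<theta> + real_of_int C) / BB\<bar>"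
  define e1 where "e1 = \<bar>y - real_of_int r / Q\<bar>"
  define e2 where "e2 = \<bar>real_of_int r / Q - (real_of_int A * \<theta> + real_of_int C) / BB\<bar>"
  define cq where "cq = c / (Q * BB)"
  define w where "w = l / R^n"
  have "e0 < w / 2" using tri i1 i2 i3 unfolding e0_def[symmetric] e1_def[symmetric] e2_def[symmetric] cq_def[symmetric] w_def[symmetric]
    by linarith
  then have "\<bar>y - (real_of_int A * \<theta> + real_of_int C) / BB\<bar> < (l / R^n) / 2" unfolding e0_def w_def .
  then show ?thesis unfolding BB_def .
qed

theorem lemma4p3:
  fixes s t \<theta> \<beta> a b :: real
    and L :: "int \<times> int \<times> int \<Rightarrow> int \<times> int \<times> int"
    and I :: "nat list \<Rightarrow> real set"
    and n k :: nat and \<tau>' :: "nat list"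
  defines "R \<equiv> Rpar \<beta>"
  defines "l \<equiv> b - a"
  defines "m \<equiv> nat \<lfloor>R\<rfloor>"
  defines "c \<equiv> cconst s t \<theta> \<beta> l"
  assumes st: "s > 0" "t > 0" "s + t = 1"
    and dio: "dioph_inf s \<theta> > 0"
    and beta: "0 < \<beta>" "\<beta> < 1"
    and ab: "a < b"
    and L: "\<forall>P \<in> Cset s \<theta> c. line_through (L P) P \<and>
              real_of_int \<bar>fst (L P)\<bar> \<le> real_of_int (fst (snd P)) powr s \<and>
              real_of_int (Bof (L P)) \<le> real_of_int (fst (snd P)) powr t"
    and I: "good_I m R a b I"
    and nk: "1 \<le> n" "1 \<le> k" "k \<le> n"
    and tau': "\<tau>' \<in> Sset m I (\<lambda>j. \<Union>P \<in> Cn s \<theta> c l R L j. Delta t c P) (n - k)"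
  shows "finite {\<tau> \<in> tree m. length \<tau> = n \<and> prefix \<tau>' \<tau> \<and>
                   I \<tau> \<inter> (\<Union>P \<in> Cnk s t \<theta> c l R L n k. Delta t c P) \<noteq> {}}
      \<and> card {\<tau> \<in> tree m. length \<tau> = n \<and> prefix \<tau>' \<tau> \<and>
                   I \<tau> \<inter> (\<Union>P \<in> Cnk s t \<theta> c l R L n k. Delta t c P) \<noteq> {}} \<le> 2"
proof -
  define lam where "lam = 3 / t^2"
  define mu where "mu = 1 / (t*(1+t))"
  define M where "M = Hn c l R (n+1)"
  define H where "H = M powr (t/(1+t))"
  define bad where "bad = (\<lambda>j. \<Union>P \<in> Cn s \<theta> c l R L j. Delta t c P)"
  define CK where "CK = Cnk s t \<theta> c l R L n k"
  have lpos: "l > 0" using ab unfolding l_def by simp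
  have tl1: "t < 1" using st by simp
  have sdef: "s = 1 - t" using st by simp
  have Rge: "R \<ge> 16"
  proof -
    have b4: "\<beta> powr 4 \<le> 1" using beta by (intro powr_le1) auto
    have "\<beta> powr 4 > 0" using beta by simp
    then have "\<beta> powr (-4) \<ge> 1" using b4 by (simp add: powr_minus field_simps)
    then show ?thesis unfolding R_def Rpar_def by simp
  qed
  have Rp: "R > 0" using Rge by simp
  have c_eq: "c = min (dioph_inf s \<theta>) (min (1/4 * l * R powr (-1)) (1/8 * R powr (-2 - 3/t^2)))"
    unfolding c_def cconst_def R_def ..
  have cpos: "c > 0" using c_eq dio lpos Rp by simp
  have cl: "4 * c * R \<le> l"
  proof -
    have "c \<le> 1/4 * l * R powr (-1)" using c_eq by simp
    then show ?thesis using Rp by (simp add: powr_neg_one field_simps)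
  qed
  have X1: "R powr lam \<ge> 1" using Rge unfolding lam_def using st by (intro ge_one_powr_ge_zero) auto
  have cR: "8 * c * R^2 * R powr lam \<le> 1"
  proof -
    have c8: "8 * c \<le> R powr (-2 - lam)" using c_eq unfolding lam_def by simp
    have e: "R powr (-2 - lam) * R^2 * R powr lam = 1"
    proof -
      have r2: "R^2 = R powr 2" using Rp by simp
      have "R powr (-2 - lam) * R powr 2 * R powr lam = R powr ((-2 - lam) + 2 + lam)"
        by (simp only: powr_add)
      also have "\<dots> = 1" using Rp by simp
      finally show ?thesis unfolding r2 .
    qed
    have "8 * c * R^2 * R powr lam \<le> R powr (-2 - lam) * R^2 * R powr lam"
      using c8 Rp by (intro mult_right_mono) auto
    then show ?thesis using e by simp
  qed
  have Hn_eq: "\<And>j. Hn c l R j = 4*c/l * R^j" unfolding Hn_def using lpos by (simp add: powr_neg_one)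
  have Rpw: "\<And>j::nat. R powr (- real j) = 1 / R^j" using Rp by (simp add: powr_minus powr_realpow divide_inverse)
  have M_eq: "M = 4*c/l * R^(n+1)" unfolding M_def Hn_eq ..
  have Mpos: "M > 0" using M_eq cpos lpos Rp by simp
  have Hnn: "Hn c l R n = M / R" unfolding M_eq Hn_eq using Rp by simp
  have H1: "Hn c l R 1 \<le> 1" unfolding Hn_eq using cl lpos by (simp add: field_simps)
  have tau'p: "\<tau>' \<in> tree m" "length \<tau>' = n - k" using sset_props[OF tau'] by auto
  have Iint: "\<And>v. v \<in> tree m \<Longrightarrow> \<exists>u. I v = {u .. u + l / R^(length v)}"
    using I unfolding good_I_def l_def[symmetric] by (simp add: Rpw)
  have Isub: "\<And>v w. v \<in> tree m \<Longrightarrow> w \<in> tree m \<Longrightarrow> prefix w v \<Longrightarrow> I v \<subseteq> I w"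
    using I unfolding good_I_def by blast
  have ydist: "\<And>y1 y2. y1 \<in> I \<tau>' \<Longrightarrow> y2 \<in> I \<tau>' \<Longrightarrow> \<bar>y1 - y2\<bar> \<le> l / R^(n-k)"
  proof -
    fix y1 y2 assume "y1 \<in> I \<tau>'" "y2 \<in> I \<tau>'"
    moreover obtain u where "I \<tau>' = {u .. u + l / R^(length \<tau>')}" using Iint tau'p by blast
    ultimately show "\<bar>y1 - y2\<bar> \<le> l / R^(n-k)" using tau'p by auto
  qed
  have Mdl: "M * (l / R^(n-k)) = 4*c*R^(k+1)"
  proof -
    have "R^(n+1) = R^(n-k) * R^(k+1)" using nk by (simp add: power_add[symmetric])
    then show ?thesis unfolding M_eq using lpos Rp by (simp add: field_simps)
  qed
  have sle1: "s \<le> 1" using st by simp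
  have c8: "8 * c \<le> 1"
  proof -
    have "R^2 \<ge> 1" using Rge by (intro one_le_power) simp
    then have "R^2 * R powr lam \<ge> 1 * 1" using X1 by (intro mult_mono) auto
    then have "8 * c * 1 \<le> 8 * c * (R^2 * R powr lam)" using cpos by (intro mult_left_mono) auto
    then show ?thesis using cR by (simp add: mult.assoc)
  qed
  have same: "L P1 = L P2" if P1: "P1 \<in> CK" and P2: "P2 \<in> CK"
    and y1: "y1 \<in> Delta t c P1" "y1 \<in> I \<tau>'" and y2: "y2 \<in> Delta t c P2" "y2 \<in> I \<tau>'" for P1 P2 y1 y2
  proof -
    obtain p1 q1 r1 where P1e: "P1 = (p1,q1,r1)" by (cases P1) auto
    obtain p2 q2 r2 where P2e: "P2 = (p2,q2,r2)" by (cases P2) auto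
    obtain A1 B1 C1 where L1: "L (p1,q1,r1) = (A1,B1,C1)" by (cases "L (p1,q1,r1)") auto
    obtain A2 B2 C2 where L2: "L (p2,q2,r2) = (A2,B2,C2)" by (cases "L (p2,q2,r2)") auto
    have Cn1: "(p1,q1,r1) \<in> Cn s \<theta> c l R L n" using P1 nk unfolding CK_def P1e Cnk_def Let_def by (auto split: if_splits)
    have Cn2: "(p2,q2,r2) \<in> Cn s \<theta> c l R L n" using P2 nk unfolding CK_def P2e Cnk_def Let_def by (auto split: if_splits)
    have C1s: "(p1,q1,r1) \<in> Cset s \<theta> c" using Cn1 by (simp add: Cn_def)
    have C2s: "(p2,q2,r2) \<in> Cset s \<theta> c" using Cn2 by (simp add: Cn_def)
    note u1 = unpack[OF C1s L1 L]
    note u2 = unpack[OF C2s L2 L]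
    have qB1: "M/R \<le> real_of_int q1 * real_of_int B1" "real_of_int q1 * real_of_int B1 < M"
      using Cn1 L1 Hnn unfolding Cn_def Bof_def M_def by auto
    have qB2: "M/R \<le> real_of_int q2 * real_of_int B2" "real_of_int q2 * real_of_int B2 < M"
      using Cn2 L2 Hnn unfolding Cn_def Bof_def M_def by auto
    have yy1: "\<bar>y1 - real_of_int r1 / real_of_int q1\<bar> < c / real_of_int q1 powr (1+t)"
      using y1(1) unfolding P1e by (simp add: Delta_def)
    have yy2: "\<bar>y2 - real_of_int r2 / real_of_int q2\<bar> < c / real_of_int q2 powr (1+t)"
      using y2(1) unfolding P2e by (simp add: Delta_def)
    have dl: "\<bar>y1 - y2\<bar> \<le> l / R^(n-k)" using ydist y1(2) y2(2) by blast
    have q1p: "real_of_int q1 > 0" and q2p: "real_of_int q2 > 0" using u1(1) u2(1) by auto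
    have B1p: "real_of_int B1 > 0" and B2p: "real_of_int B2 > 0" using u1(5) u2(5) by auto
    have Bof1: "Bof (L P1) = B1" and Bof2: "Bof (L P2) = B2" using L1 L2 P1e P2e by (simp_all add: Bof_def)
    show ?thesis
    proof (cases "k = 1")
      case True
      define X where "X = R powr lam"
      have Xe: "R powr (- (3/t^2)) = 1 / X" unfolding X_def lam_def by (simp add: powr_minus divide_inverse)
      have "P1 \<in> Cnk s t \<theta> c l R L n 1" using P1 True unfolding CK_def by simp
      then have "H * R powr (- (3/t^2)) \<le> real_of_int B1 \<and> real_of_int B1 < H" unfolding Cnk1 H_def M_def Bof1 by simp
      then have Hb1: "H / X \<le> real_of_int B1" "real_of_int B1 < H" unfolding Xe by auto
      have "P2 \<in> Cnk s t \<theta> c l R L n 1" using P2 True unfolding CK_def by simp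
      then have "H * R powr (- (3/t^2)) \<le> real_of_int B2 \<and> real_of_int B2 < H" unfolding Cnk1 H_def M_def Bof2 by simp
      then have Hb2: "H / X \<le> real_of_int B2" "real_of_int B2 < H" unfolding Xe by auto
      have Mdl1: "M * (l / R^(n-k)) \<le> 4*c*R^2" using Mdl True by (simp add: power2_eq_square)
      have cb: "8 * c * R^2 * X \<le> 1" using cR unfolding X_def .
      have X1': "X \<ge> 1" using X1 unfolding X_def .
      have z1: "\<bar>real_of_int A2 * real_of_int p1 + real_of_int C2 * real_of_int q1 - real_of_int B2 * real_of_int r1\<bar> < 1"
        by (rule k1_core[OF q1p q2p B1p B2p st(1) sle1 st(2) cpos Rge X1' u2(7) u1(8) u2(8) u1(3) u2(3) yy1 yy2 dl Mdl1 u2(6) Hb1 Hb2 qB1 qB2 cb])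
      have dl': "\<bar>y2 - y1\<bar> \<le> l / R^(n-k)" using dl by (simp add: abs_minus_commute)
      have z2: "\<bar>real_of_int A1 * real_of_int p2 + real_of_int C1 * real_of_int q2 - real_of_int B1 * real_of_int r2\<bar> < 1"
        by (rule k1_core[OF q2p q1p B2p B1p st(1) sle1 st(2) cpos Rge X1' u1(7) u2(8) u1(8) u2(3) u1(3) yy2 yy1 dl' Mdl1 u1(6) Hb2 Hb1 qB2 qB1 cb])
      have Z1: "A2 * p1 + C2 * q1 - B2 * r1 = 0"
      proof -
        have "real_of_int \<bar>A2 * p1 + C2 * q1 - B2 * r1\<bar> < 1" using z1 by simp
        then have "\<bar>A2 * p1 + C2 * q1 - B2 * r1\<bar> < 1" by (simp only: of_int_less_1_iff)
        then show ?thesis by (simp add: abs_less_iff)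
      qed
      have Z2: "A1 * p2 + C1 * q2 - B1 * r2 = 0"
      proof -
        have "real_of_int \<bar>A1 * p2 + C1 * q2 - B1 * r2\<bar> < 1" using z2 by simp
        then have "\<bar>A1 * p2 + C1 * q2 - B1 * r2\<bar> < 1" by (simp only: of_int_less_1_iff)
        then show ?thesis by (simp add: abs_less_iff)
      qed
      define x1 where "x1 = real_of_int p1 / real_of_int q1"
      define x2 where "x2 = real_of_int p2 / real_of_int q2"
      define w1 where "w1 = real_of_int r1 / real_of_int q1"
      define w2 where "w2 = real_of_int r2 / real_of_int q2"
      have h11: "real_of_int B1 * w1 = real_of_int A1 * x1 + real_of_int C1"
        using u1(6) B1p unfolding w1_def x1_def by (simp add: field_simps)
      have h22: "real_of_int B2 * w2 = real_of_int A2 * x2 + real_of_int C2"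
        using u2(6) B2p unfolding w2_def x2_def by (simp add: field_simps)
      have h21: "real_of_int B2 * w1 = real_of_int A2 * x1 + real_of_int C2"
      proof -
        have "real_of_int (A2 * p1 + C2 * q1 - B2 * r1) = 0" using Z1 by simp
        then show ?thesis using q1p unfolding w1_def x1_def by (simp add: field_simps)
      qed
      have h12: "real_of_int B1 * w2 = real_of_int A1 * x2 + real_of_int C1"
      proof -
        have "real_of_int (A1 * p2 + C1 * q2 - B1 * r2) = 0" using Z2 by simp
        then show ?thesis using q2p unfolding w2_def x2_def by (simp add: field_simps)
      qed
      show ?thesis
      proof (cases "(x1, w1) = (x2, w2)")
        case True
        then have "(p1,q1,r1) = (p2,q2,r2)" using ratpt_eq[OF u1(2) u2(2)] unfolding x1_def x2_def w1_def w2_def by simp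
        then show ?thesis using P1e P2e by simp
      next
        case False
        have "(A1,B1,C1) = (A2,B2,C2)" by (rule lines_eq[OF u1(4) u2(4) u1(5) u2(5) False h11 h12 h21 h22])
        then show ?thesis using L1 L2 P1e P2e by simp
      qed
    next
      case False
      then have k2: "k \<ge> 2" using nk by simp
      define e where "e = - lam - (real k - 2) * mu"
      define HE where "HE = H * R powr e"
      define K where "K = R powr mu"
      define W where "W = (M*K/HE) powr s * HE"
      have Kp: "K > 0" unfolding K_def using Rp by simp
      have ee: "R powr (- (3/t^2) - (real k - 1) * (1/(t*(1+t)))) = R powr e / K"
      proof -
        have "- (3/t^2) - (real k - 1) * (1/(t*(1+t))) = - lam - (real k - 1) * mu" unfolding lam_def mu_def ..
        also have "\<dots> = e - mu" unfolding e_def by (simp add: algebra_simps)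
        finally have "- (3/t^2) - (real k - 1) * (1/(t*(1+t))) = e - mu" .
        then show ?thesis unfolding K_def by (simp add: powr_diff)
      qed
      have ee2: "R powr (- (3/t^2) - (real k - 2) * (1/(t*(1+t)))) = R powr e" unfolding e_def lam_def mu_def by simp
      have HB1: "HE/K \<le> real_of_int B1" "real_of_int B1 < HE"
      proof -
        have "H * (R powr e / K) \<le> real_of_int B1 \<and> real_of_int B1 < H * R powr e"
          using P1 k2 nk(3) Bof1 unfolding CK_def Cnk2[OF k2 nk(3)] H_def M_def ee ee2 by simp
        then show "HE/K \<le> real_of_int B1" "real_of_int B1 < HE" unfolding HE_def by auto
      qed
      have HB2: "HE/K \<le> real_of_int B2" "real_of_int B2 < HE"
      proof -
        have "H * (R powr e / K) \<le> real_of_int B2 \<and> real_of_int B2 < H * R powr e"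
          using P2 k2 nk(3) Bof2 unfolding CK_def Cnk2[OF k2 nk(3)] H_def M_def ee ee2 by simp
        then show "HE/K \<le> real_of_int B2" "real_of_int B2 < HE" unfolding HE_def by auto
      qed
      have M1: "M \<ge> 1"
      proof -
        have "q1 * B1 \<ge> 1" using mult_pos_pos[OF u1(1) u1(5)] by linarith   
        then have "real_of_int q1 * real_of_int B1 \<ge> 1" by (metis of_int_1_le_iff of_int_mult)
        then show ?thesis using qB1(2) by simp
      qed
      have NN: "W powr (1+t) \<le> M / R^(k+4)" "HE^2 * W powr s \<le> M / R^(k+3)" "HE^2 \<le> M / R^(k+1)"
        using num_kge2[OF st(2) tl1 M1 Rge k2]
        unfolding W_def HE_def H_def e_def K_def lam_def mu_def sdef by simp_all
      have Mdl2: "M * (l / R^(n-k)) \<le> 4*c*R^(k+1)" using Mdl by simp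
      have Wd: "W = (M*K/HE) powr s * HE" unfolding W_def ..
      note ctx = q1p q2p B1p B2p cpos Rge st(1) st(2) st(3) u1(7) u2(7) u1(8) u2(8) u1(3) u2(3) yy1 yy2 dl Mdl2
        u1(6) u2(6) HB1(1) HB1(2) HB2(1) HB2(2) Kp qB1(1) qB1(2) qB2(1) qB2(2) Wd NN(1) NN(2) NN(3) c8
      show ?thesis
      proof (cases "A1*B2 - A2*B1 = 0")
        case True
        have "real_of_int A1 * real_of_int B2 - real_of_int A2 * real_of_int B1 = 0"
          using True by (metis of_int_0 of_int_diff of_int_mult)
        note kz = kzero[OF ctx this]
        have "real_of_int \<bar>B2*C1 - B1*C2\<bar> < 1" using kz by simp
        then have "\<bar>B2*C1 - B1*C2\<bar> < 1" by (simp only: of_int_less_1_iff)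
        then have NZ: "B2*C1 - B1*C2 = 0" by (simp add: abs_less_iff)
        have "A1 = A2 \<and> B1 = B2 \<and> C1 = C2"
          by (rule gcd3_eq[OF u1(4) u2(4) u1(5) u2(5)]) (use True NZ in \<open>simp_all add: algebra_simps\<close>)
        then show ?thesis using L1 L2 P1e P2e by simp
      next
        case False
        define D where "D = A1*B2 - A2*B1"
        define N where "N = B2*C1 - B1*C2"
        define Y where "Y = A1*C2 - A2*C1"
        have D1: "\<bar>real_of_int A1 * real_of_int B2 - real_of_int A2 * real_of_int B1\<bar> \<ge> 1"
        proof -
          have "\<bar>D\<bar> \<ge> 1" using False unfolding D_def by simp
          then have "real_of_int \<bar>D\<bar> \<ge> 1" by (simp only: of_int_1_le_iff)
          then show ?thesis unfolding D_def by simp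
        qed
        note km = kmain[OF ctx D1]
        obtain p0 q0 r0 where r0: "ratpt (p0,q0,r0)" "q0 \<le> \<bar>D\<bar>"
          "real_of_int p0 / real_of_int q0 = - real_of_int N / real_of_int D"
          "real_of_int r0 / real_of_int q0 = real_of_int Y / real_of_int D"
          using mk_ratpt[of D N Y] False unfolding D_def by blast
        have q0p: "real_of_int q0 > 0" using r0(1) unfolding ratpt_def by simp
        have Dq: "real_of_int q0 \<le> \<bar>real_of_int D\<bar>" using r0(2) by simp
        have Dr: "\<bar>real_of_int D\<bar> = \<bar>real_of_int A1 * real_of_int B2 - real_of_int A2 * real_of_int B1\<bar>"
          unfolding D_def by simp
        have xq: "\<bar>\<theta> - real_of_int p0 / real_of_int q0\<bar> < c / real_of_int q0 powr (1+s)"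
        proof -
          have "\<bar>\<theta> - real_of_int p0 / real_of_int q0\<bar> < c / \<bar>real_of_int D\<bar> powr (1+s)"
            using km(1) unfolding r0(3) Dr N_def D_def by simp
          also have "\<dots> \<le> c / real_of_int q0 powr (1+s)"
            using Dq q0p cpos st by (intro divide_left_mono powr_mono2 mult_pos_pos) auto
          finally show ?thesis .
        qed
        have yq: "\<bar>y1 - real_of_int r0 / real_of_int q0\<bar> < c / real_of_int q0 powr (1+t)"
        proof -
          have "\<bar>y1 - real_of_int r0 / real_of_int q0\<bar> < c / \<bar>real_of_int D\<bar> powr (1+t)"
            using km(2) unfolding r0(4) Dr Y_def D_def by simp
          also have "\<dots> \<le> c / real_of_int q0 powr (1+t)"
            using Dq q0p cpos st by (intro divide_left_mono powr_mono2 mult_pos_pos) auto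
          finally show ?thesis .
        qed
        have Dlev: "\<bar>real_of_int D\<bar> powr (1+t) < M / R^k" using km(3) unfolding Dr .
        have P0C: "(p0,q0,r0) \<in> Cset s \<theta> c" unfolding Cset_def using r0(1) xq by simp
        obtain A0 B0 C0 where L0: "L (p0,q0,r0) = (A0,B0,C0)" by (cases "L (p0,q0,r0)") auto
        note u0 = unpack[OF P0C L0 L]
        define x where "x = real_of_int (q0 * B0)"
        have x1: "x \<ge> 1"
        proof -
          have "q0 * B0 \<ge> 1" using mult_pos_pos[OF u0(1) u0(5)] by linarith
          then show ?thesis unfolding x_def by (simp only: of_int_1_le_iff)
        qed
        have xlt: "x < Hn c l R ((n-k)+1)"
        proof -
          have "x = real_of_int q0 * real_of_int B0" unfolding x_def by simp
          also have "\<dots> \<le> real_of_int q0 * real_of_int q0 powr t" using u0(8) q0p by simp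
          also have "\<dots> = real_of_int q0 powr (1+t)" using q0p by (simp add: powr_add)
          also have "\<dots> \<le> \<bar>real_of_int D\<bar> powr (1+t)" using Dq q0p st by (intro powr_mono2) auto
          also have "\<dots> < M / R^k" by (rule Dlev)
          also have "\<dots> = Hn c l R ((n-k)+1)"
          proof -
            have "R^(n+1) = R^((n-k)+1) * R^k" using nk by (simp add: power_add[symmetric])
            then show ?thesis unfolding M_eq Hn_eq using Rp by simp
          qed
          finally show ?thesis .
        qed
        obtain j where j: "1 \<le> j" "j \<le> n-k" "Hn c l R j \<le> x" "x < Hn c l R (j+1)"
          using find_level[of "Hn c l R" x "n-k"] H1 x1 xlt by force
        have P0j: "(p0,q0,r0) \<in> Cn s \<theta> c l R L j"
          unfolding Cn_def Bof_def using P0C j L0 unfolding x_def by simp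
        have ybad: "y1 \<in> bad j" unfolding bad_def using P0j yq by (auto simp: Delta_def)
        have tj: "take j \<tau>' \<in> Sset m I bad j" using sset_take[OF tau'[folded bad_def] j(2)] .
        obtain j' where jj: "j = Suc j'" using j(1) by (cases j) auto
        have av: "I (take j \<tau>') \<inter> bad j = {}" using sset_avoid[OF tj[unfolded jj]] jj by simp
        have "I \<tau>' \<subseteq> I (take j \<tau>')" using Isub[OF tau'p(1) tree_take[OF tau'p(1)]] by (simp add: take_is_prefix)
        then show ?thesis using av ybad y1(2) by blast
      qed

    qed
  qed
  define S where "S = {\<tau> \<in> tree m. length \<tau> = n \<and> prefix \<tau>' \<tau> \<and>
                   I \<tau> \<inter> (\<Union>P \<in> Cnk s t \<theta> c l R L n k. Delta t c P) \<noteq> {}}"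
  have finS: "finite S"
  proof -
    have "S \<subseteq> {xs. set xs \<subseteq> {..<m} \<and> length xs = n}" unfolding S_def tree_def by auto
    moreover have "finite {xs. set xs \<subseteq> {..<m} \<and> length xs = n}" by (rule finite_lists_length_eq) simp
    ultimately show ?thesis by (rule finite_subset)
  qed
  have cardS: "card S \<le> 2"
  proof (cases "S = {}")
    case True then show ?thesis by simp
  next
    case False
    then obtain \<tau>0 where t0: "\<tau>0 \<in> S" by blast
    then obtain P0 z0 where P0: "P0 \<in> CK" "z0 \<in> I \<tau>0" "z0 \<in> Delta t c P0" unfolding S_def CK_def by blast
    have t0t: "\<tau>0 \<in> tree m" "prefix \<tau>' \<tau>0" using t0 unfolding S_def by auto
    have z0t: "z0 \<in> I \<tau>'" using Isub[OF t0t(1) tau'p(1) t0t(2)] P0(2) by blast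
    obtain A B C where LP0: "L P0 = (A,B,C)" by (cases "L P0") auto
    define yL where "yL = (real_of_int A * \<theta> + real_of_int C) / real_of_int B"
    define d where "d = l / R^n"
    have dpos: "d > 0" unfolding d_def using lpos Rp by simp
    have hit: "\<forall>\<tau>\<in>S. I \<tau> \<inter> {z. \<bar>z - yL\<bar> < d/2} \<noteq> {}"
    proof
      fix \<tau> assume tS: "\<tau> \<in> S"
      then obtain P z where P: "P \<in> CK" "z \<in> I \<tau>" "z \<in> Delta t c P" unfolding S_def CK_def by blast
      have tt: "\<tau> \<in> tree m" "prefix \<tau>' \<tau>" using tS unfolding S_def by auto
      have zt: "z \<in> I \<tau>'" using Isub[OF tt(1) tau'p(1) tt(2)] P(2) by blast
      have LPe: "L P = (A,B,C)" using same[OF P(1) P0(1) P(3) zt P0(3) z0t] LP0 by simp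
      obtain p q r where Pe: "P = (p,q,r)" by (cases P) auto
      have Cnn: "(p,q,r) \<in> Cn s \<theta> c l R L n" using P(1) nk unfolding CK_def Pe Cnk_def Let_def by (auto split: if_splits)
      have PC: "(p,q,r) \<in> Cset s \<theta> c" using Cnn by (simp add: Cn_def)
      have Hq: "Hn c l R n \<le> real_of_int q * real_of_int B" using Cnn LPe Pe unfolding Cn_def Bof_def by simp
      have "\<bar>z - yL\<bar> < d/2" unfolding yL_def d_def
        by (rule delta_near[OF PC LPe[unfolded Pe] L Hq Hn_eq P(3)[unfolded Pe] cpos lpos Rp])
      then show "I \<tau> \<inter> {z. \<bar>z - yL\<bar> < d/2} \<noteq> {}" using P(2) by blast
    qed
    have iv: "\<forall>x\<in>S. \<exists>u. I x = {u..u+d}"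
    proof
      fix x assume "x \<in> S"
      then have "x \<in> tree m" "length x = n" unfolding S_def by auto
      then show "\<exists>u. I x = {u..u+d}" using Iint unfolding d_def by auto
    qed
    have dj: "\<forall>x\<in>S. \<forall>x'\<in>S. x \<noteq> x' \<longrightarrow> interior (I x) \<inter> interior (I x') = {}"
      using tree_disj[OF I] unfolding S_def by auto
    show ?thesis by (rule count_lemma[OF finS dpos iv dj hit])
  qed
  show ?thesis using finS cardS unfolding S_def by blast
qed


end
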